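(* For all terms $P,Q$ of $\mathcal{L}$: if $P\equiv Q$ or $P\sim_{\mathrm{HOIO}}Q$, then $d(P)=d(Q)$.
   Context: Calculus $\mathcal{L}$: names are constants ($a,b,c,d$) or name variables ($x,y,z$), $m,n$ range over names; process variables $X,Y,Z$. Terms: $P,Q::=0\mid X\mid m(X).P\mid \overline{m}(Q)\mid P|Q\mid \langle X\rangle P\mid P\langle Q\rangle\mid\langle x\rangle P\mid P\langle n\rangle$, with the usual binders, identified up to $\alpha$-conversion, well-typed and with terminating applications. Structural congruence $\equiv$: smallest congruence with associativity and commutativity of $|$, $P|0\equiv P$, $(\langle X\rangle P)\langle Q\rangle\equiv P\{Q/X\}$, $(\langle x\rangle P)\langle m\rangle\equiv P\{m/x\}$. Transitions: $m(X).P\xrightarrow{m(X)}P$; $\overline{m}Q\xrightarrow{\overline{m}Q}0$; $P\xrightarrow{\lambda}P'$ implies $P|Q\xrightarrow{\lambda}P'|Q$; $P\xrightarrow{\overline{m}A}P'$, $Q\xrightarrow{m(X)}Q'$ imply $P|Q\xrightarrow{\tau}P'|Q'\{A/X\}$; symmetric versions; closure under $\equiv$. Depth $d$: $d(0)=0$, $d(X)=1$, $d(m(X).P)=d(P)+1$, $d(\overline{m}(P))=d(P)+1$, $d(P_1|P_2)=d(P_1)+d(P_2)$, $d(\langle X\rangle P)=d(P)+1$, $d(X\langle P\rangle)=d(P)+1$, $d((\langle Y\rangle P_3)\langle P_2\rangle)=d(P_3\{P_2/Y\})$, $d(\langle x\rangle P)=d(P)+1$, $d(X\langle n\rangle)=1$,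 $d((\langle y\rangle P_3)\langle n\rangle)=d(P_3\{n/y\})$. Strong HO-IO bisimulation: symmetric $R$ on terms such that $P\,R\,Q$ implies: (1) if $P$ is a non-abstraction (not of form $\langle Y\rangle A$ or $\langle y\rangle A$) so is $Q$; (2) if $P=\langle Y\rangle A$ then $Q=\langle Y\rangle B$, $A\,R\,B$; (3) if $P=\langle y\rangle A$ then $Q=\langle y\rangle B$, $A\,R\,B$; (4) if $P\xrightarrow{\overline{a}A}P'$ then $Q\xrightarrow{\overline{a}B}Q'$, $A\,R\,B$, $P'\,R\,Q'$; (5) if $P\xrightarrow{a(X)}P'$ then $Q\xrightarrow{a(X)}Q'$, $P'\,R\,Q'$; (6) if $P\equiv X|P'$ then $Q\equiv X|Q'$, $P'\,R\,Q'$; (7) if $P\equiv X\langle A\rangle|P'$ then $Q\equiv X\langle B\rangle|Q'$, $A\,R\,B$, $P'\,R\,Q'$; (8) if $P\equiv X\langle d\rangle|P'$ then $Q\equiv X\langle d\rangle|Q'$, $P'\,R\,Q'$. $\sim_{\mathrm{HOIO}}$ is the largest such relation. *)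

theory Defs
  imports Main
begin

section \<open>Syntax of the calculus L (de Bruijn representation, so terms are identified up to alpha)\<close>

text \<open>Names: constants (a,b,c,d,...) and name variables (de Bruijn indices).\<close>
datatype name = NC nat | NV nat

text \<open>Process variables are de Bruijn indices PV i.
  Inp m P = m(X).P (binds a process variable), Out m Q = m-bar(Q),
  PAbs P = <X>P (binds a process variable), PApp P Q = P<Q>,
  NAbs P = <x>P (binds a name variable), NApp P n = P<n>.\<close>
datatype trm =
    Nil
  | PV nat
  | Inp name trm
  | Out name trm
  | Par trm trm
  | PAbs trm
  | PApp trm trm
  | NAbs trm
  | NApp trm name

fun liftNm :: "nat \<Rightarrow> name \<Rightarrow> name" where
  "liftNm k (NC c) = NC c"
| "liftNm k (NV i) = (if i < k then NV i else NV (Suc i))"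

fun substNm :: "nat \<Rightarrow> name \<Rightarrow> name \<Rightarrow> name" where
  "substNm k n (NC c) = NC c"
| "substNm k n (NV i) = (if i < k then NV i else if i = k then n else NV (i - 1))"

fun liftN :: "nat \<Rightarrow> trm \<Rightarrow> trm" where
  "liftN k Nil = Nil"
| "liftN k (PV i) = PV i"
| "liftN k (Inp m P) = Inp (liftNm k m) (liftN k P)"
| "liftN k (Out m P) = Out (liftNm k m) (liftN k P)"
| "liftN k (Par P Q) = Par (liftN k P) (liftN k Q)"
| "liftN k (PAbs P) = PAbs (liftN k P)"
| "liftN k (PApp P Q) = PApp (liftN k P) (liftN k Q)"
| "liftN k (NAbs P) = NAbs (liftN (Suc k) P)"
| "liftN k (NApp P m) = NApp (liftN k P) (liftNm k m)"

fun liftP :: "nat \<Rightarrow> trm \<Rightarrow> trm" where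
  "liftP k Nil = Nil"
| "liftP k (PV i) = (if i < k then PV i else PV (Suc i))"
| "liftP k (Inp m P) = Inp m (liftP (Suc k) P)"
| "liftP k (Out m P) = Out m (liftP k P)"
| "liftP k (Par P Q) = Par (liftP k P) (liftP k Q)"
| "liftP k (PAbs P) = PAbs (liftP (Suc k) P)"
| "liftP k (PApp P Q) = PApp (liftP k P) (liftP k Q)"
| "liftP k (NAbs P) = NAbs (liftP k P)"
| "liftP k (NApp P m) = NApp (liftP k P) m"

text \<open>substP k Q P = P{Q/X_k} (capture-avoiding; indices above k are decremented).\<close>
fun substP :: "nat \<Rightarrow> trm \<Rightarrow> trm \<Rightarrow> trm" where
  "substP k Q Nil = Nil"
| "substP k Q (PV i) = (if i < k then PV i else if i = k then Q else PV (i - 1))"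
| "substP k Q (Inp m P) = Inp m (substP (Suc k) (liftP 0 Q) P)"
| "substP k Q (Out m P) = Out m (substP k Q P)"
| "substP k Q (Par P1 P2) = Par (substP k Q P1) (substP k Q P2)"
| "substP k Q (PAbs P) = PAbs (substP (Suc k) (liftP 0 Q) P)"
| "substP k Q (PApp P1 P2) = PApp (substP k Q P1) (substP k Q P2)"
| "substP k Q (NAbs P) = NAbs (substP k (liftN 0 Q) P)"
| "substP k Q (NApp P m) = NApp (substP k Q P) m"

fun substN :: "nat \<Rightarrow> name \<Rightarrow> trm \<Rightarrow> trm" where
  "substN k n Nil = Nil"
| "substN k n (PV i) = PV i"
| "substN k n (Inp m P) = Inp (substNm k n m) (substN k n P)"
| "substN k n (Out m P) = Out (substNm k n m) (substN k n P)"
| "substN k n (Par P Q) = Par (substN k n P) (substN k n Q)"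
| "substN k n (PAbs P) = PAbs (substN k n P)"
| "substN k n (PApp P Q) = PApp (substN k n P) (substN k n Q)"
| "substN k n (NAbs P) = NAbs (substN (Suc k) (liftNm 0 n) P)"
| "substN k n (NApp P m) = NApp (substN k n P) (substNm k n m)"

text \<open>Pr: processes; PArrT s: abstractions over a process variable of type s (body a process);
  NArrT: abstractions over a name (body a process).\<close>
datatype ty = Pr | PArrT ty | NArrT

definition ext_ctx :: "ty \<Rightarrow> (nat \<Rightarrow> ty) \<Rightarrow> (nat \<Rightarrow> ty)" where
  "ext_ctx s G = (\<lambda>i. case i of 0 \<Rightarrow> s | Suc j \<Rightarrow> G j)"

inductive typed :: "(nat \<Rightarrow> ty) \<Rightarrow> trm \<Rightarrow> ty \<Rightarrow> bool" where
  t_nil:  "typed G Nil Pr"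
| t_var:  "typed G (PV i) (G i)"
| t_inp:  "typed (ext_ctx s G) P Pr \<Longrightarrow> typed G (Inp m P) Pr"
| t_out:  "typed G Q s \<Longrightarrow> typed G (Out m Q) Pr"
| t_par:  "typed G P Pr \<Longrightarrow> typed G Q Pr \<Longrightarrow> typed G (Par P Q) Pr"
| t_pabs: "typed (ext_ctx s G) P Pr \<Longrightarrow> typed G (PAbs P) (PArrT s)"
| t_papp: "typed G P (PArrT s) \<Longrightarrow> typed G Q s \<Longrightarrow> typed G (PApp P Q) Pr"
| t_nabs: "typed G P Pr \<Longrightarrow> typed G (NAbs P) NArrT"
| t_napp: "typed G P NArrT \<Longrightarrow> typed G (NApp P n) Pr"

definition well_typed :: "trm \<Rightarrow> bool" where
  "well_typed P \<longleftrightarrow> (\<exists>G s. typed G P s)"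

inductive beta :: "trm \<Rightarrow> trm \<Rightarrow> bool" where
  b_p:    "beta (PApp (PAbs P) Q) (substP 0 Q P)"
| b_n:    "beta (NApp (NAbs P) n) (substN 0 n P)"
| b_inp:  "beta P P' \<Longrightarrow> beta (Inp m P) (Inp m P')"
| b_out:  "beta P P' \<Longrightarrow> beta (Out m P) (Out m P')"
| b_parl: "beta P P' \<Longrightarrow> beta (Par P Q) (Par P' Q)"
| b_parr: "beta Q Q' \<Longrightarrow> beta (Par P Q) (Par P Q')"
| b_pabs: "beta P P' \<Longrightarrow> beta (PAbs P) (PAbs P')"
| b_appl: "beta P P' \<Longrightarrow> beta (PApp P Q) (PApp P' Q)"
| b_appr: "beta Q Q' \<Longrightarrow> beta (PApp P Q) (PApp P Q')"
| b_nabs: "beta P P' \<Longrightarrow> beta (NAbs P) (NAbs P')"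
| b_napp: "beta P P' \<Longrightarrow> beta (NApp P n) (NApp P' n)"

inductive SN :: "trm \<Rightarrow> bool" where
  SN_intro: "(\<And>Q. beta P Q \<Longrightarrow> SN Q) \<Longrightarrow> SN P"

inductive scong :: "trm \<Rightarrow> trm \<Rightarrow> bool" (infix "\<equiv>s" 50) where
  sc_refl:   "P \<equiv>s P"
| sc_sym:    "P \<equiv>s Q \<Longrightarrow> Q \<equiv>s P"
| sc_trans:  "P \<equiv>s Q \<Longrightarrow> Q \<equiv>s R \<Longrightarrow> P \<equiv>s R"
| sc_inp:    "P \<equiv>s P' \<Longrightarrow> Inp m P \<equiv>s Inp m P'"
| sc_out:    "P \<equiv>s P' \<Longrightarrow> Out m P \<equiv>s Out m P'"
| sc_par:    "P \<equiv>s P' \<Longrightarrow> Q \<equiv>s Q' \<Longrightarrow> Par P Q \<equiv>s Par P' Q'"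
| sc_pabs:   "P \<equiv>s P' \<Longrightarrow> PAbs P \<equiv>s PAbs P'"
| sc_papp:   "P \<equiv>s P' \<Longrightarrow> Q \<equiv>s Q' \<Longrightarrow> PApp P Q \<equiv>s PApp P' Q'"
| sc_nabs:   "P \<equiv>s P' \<Longrightarrow> NAbs P \<equiv>s NAbs P'"
| sc_napp:   "P \<equiv>s P' \<Longrightarrow> NApp P n \<equiv>s NApp P' n"
| sc_assoc:  "Par (Par P Q) R \<equiv>s Par P (Par Q R)"
| sc_comm:   "Par P Q \<equiv>s Par Q P"
| sc_nil:    "Par P Nil \<equiv>s P"
| sc_betaP:  "PApp (PAbs P) Q \<equiv>s substP 0 Q P"
| sc_betaN:  "NApp (NAbs P) n \<equiv>s substN 0 n P"

text \<open>LIn m: input m(X) (the derivative is the body, with X as de Bruijn index 0);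
  LOut m A: output of A on m; LTau: internal move.\<close>
datatype lab = LIn name | LOut name trm | LTau

inductive trans :: "trm \<Rightarrow> lab \<Rightarrow> trm \<Rightarrow> bool" where
  tr_inp:   "trans (Inp m P) (LIn m) P"
| tr_out:   "trans (Out m Q) (LOut m Q) Nil"
| tr_parl_in:  "trans P (LIn m) P' \<Longrightarrow> trans (Par P Q) (LIn m) (Par P' (liftP 0 Q))"
| tr_parl_out: "trans P (LOut m A) P' \<Longrightarrow> trans (Par P Q) (LOut m A) (Par P' Q)"
| tr_parl_tau: "trans P LTau P' \<Longrightarrow> trans (Par P Q) LTau (Par P' Q)"
| tr_parr_in:  "trans Q (LIn m) Q' \<Longrightarrow> trans (Par P Q) (LIn m) (Par (liftP 0 P) Q')"
| tr_parr_out: "trans Q (LOut m A) Q' \<Longrightarrow> trans (Par P Q) (LOut m A) (Par P Q')"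
| tr_parr_tau: "trans Q LTau Q' \<Longrightarrow> trans (Par P Q) LTau (Par P Q')"
| tr_coml: "trans P (LOut m A) P' \<Longrightarrow> trans Q (LIn m) Q' \<Longrightarrow>
              trans (Par P Q) LTau (Par P' (substP 0 A Q'))"
| tr_comr: "trans P (LIn m) P' \<Longrightarrow> trans Q (LOut m A) Q' \<Longrightarrow>
              trans (Par P Q) LTau (Par (substP 0 A P') Q')"
| tr_cong: "P \<equiv>s P1 \<Longrightarrow> trans P1 l P1' \<Longrightarrow> P1' \<equiv>s P' \<Longrightarrow> trans P l P'"

inductive dep :: "trm \<Rightarrow> nat \<Rightarrow> bool" where
  d_nil:  "dep Nil 0"
| d_var:  "dep (PV i) 1"
| d_inp:  "dep P k \<Longrightarrow> dep (Inp m P) (k + 1)"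
| d_out:  "dep P k \<Longrightarrow> dep (Out m P) (k + 1)"
| d_par:  "dep P1 k1 \<Longrightarrow> dep P2 k2 \<Longrightarrow> dep (Par P1 P2) (k1 + k2)"
| d_pabs: "dep P k \<Longrightarrow> dep (PAbs P) (k + 1)"
| d_vapp: "dep P k \<Longrightarrow> dep (PApp (PV i) P) (k + 1)"
| d_betaP: "dep (substP 0 P2 P3) k \<Longrightarrow> dep (PApp (PAbs P3) P2) k"
| d_nabs: "dep P k \<Longrightarrow> dep (NAbs P) (k + 1)"
| d_vnapp: "dep (NApp (PV i) n) 1"
| d_betaN: "dep (substN 0 n P3) k \<Longrightarrow> dep (NApp (NAbs P3) n) k"

definition depth :: "trm \<Rightarrow> nat" where
  "depth P = (THE k. dep P k)"

definition is_abstraction :: "trm \<Rightarrow> bool" where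
  "is_abstraction P \<longleftrightarrow> (\<exists>A. P = PAbs A) \<or> (\<exists>A. P = NAbs A)"

definition hoio_bisim :: "(trm \<Rightarrow> trm \<Rightarrow> bool) \<Rightarrow> bool" where
  "hoio_bisim R \<longleftrightarrow>
     (\<forall>P Q. R P Q \<longrightarrow> R Q P) \<and>
     (\<forall>P Q. R P Q \<longrightarrow>
        (\<not> is_abstraction P \<longrightarrow> \<not> is_abstraction Q) \<and>
        (\<forall>A. P = PAbs A \<longrightarrow> (\<exists>B. Q = PAbs B \<and> R A B)) \<and>
        (\<forall>A. P = NAbs A \<longrightarrow> (\<exists>B. Q = NAbs B \<and> R A B)) \<and>
        (\<forall>m A P'. trans P (LOut m A) P' \<longrightarrow>
            (\<exists>B Q'. trans Q (LOut m B) Q' \<and> R A B \<and> R P' Q')) \<and>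
        (\<forall>m P'. trans P (LIn m) P' \<longrightarrow> (\<exists>Q'. trans Q (LIn m) Q' \<and> R P' Q')) \<and>
        (\<forall>i P'. P \<equiv>s Par (PV i) P' \<longrightarrow> (\<exists>Q'. Q \<equiv>s Par (PV i) Q' \<and> R P' Q')) \<and>
        (\<forall>i A P'. P \<equiv>s Par (PApp (PV i) A) P' \<longrightarrow>
            (\<exists>B Q'. Q \<equiv>s Par (PApp (PV i) B) Q' \<and> R A B \<and> R P' Q')) \<and>
        (\<forall>i n P'. P \<equiv>s Par (NApp (PV i) n) P' \<longrightarrow>
            (\<exists>Q'. Q \<equiv>s Par (NApp (PV i) n) Q' \<and> R P' Q')))"

definition hoio_sim :: "trm \<Rightarrow> trm \<Rightarrow> bool" (infix "\<sim>HOIO" 50) where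
  "P \<sim>HOIO Q \<longleftrightarrow> (\<exists>R. hoio_bisim R \<and> R P Q)"

end

theory Submission
  imports Defs
begin


lemma liftNm_liftNm: "i \<le> j \<Longrightarrow> liftNm i (liftNm j n) = liftNm (Suc j) (liftNm i n)"
  by (cases n) auto
lemma substNm_liftNm: "substNm k m (liftNm k n) = n"
  by (cases n) auto
lemma liftNm_substNm1: "i \<le> k \<Longrightarrow> liftNm i (substNm k n x) = substNm (Suc k) (liftNm i n) (liftNm i x)"
  by (cases x) auto
lemma liftNm_substNm2: "j \<le> i \<Longrightarrow> liftNm i (substNm j n x) = substNm j (liftNm i n) (liftNm (Suc i) x)"
  by (cases x) auto
lemma substNm_substNm: "j \<le> k \<Longrightarrow> substNm k n (substNm j m x) = substNm j (substNm k n m) (substNm (Suc k) (liftNm j n) x)"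
  by (cases x) (auto simp: substNm_liftNm)

lemma liftP_liftP: "i \<le> j \<Longrightarrow> liftP i (liftP j X) = liftP (Suc j) (liftP i X)"
  by (induction X arbitrary: i j) auto
lemma liftN_liftN: "i \<le> j \<Longrightarrow> liftN i (liftN j X) = liftN (Suc j) (liftN i X)"
  by (induction X arbitrary: i j) (auto simp: liftNm_liftNm)
lemma liftP_liftN: "liftP i (liftN j X) = liftN j (liftP i X)"
  by (induction X arbitrary: i j) auto
lemma substP_liftP: "substP k Q (liftP k X) = X"
  by (induction X arbitrary: k Q) auto
lemma substN_liftN: "substN k n (liftN k X) = X"
  by (induction X arbitrary: k n) (auto simp: substNm_liftNm)
lemma substN_liftP: "substN k n (liftP j X) = liftP j (substN k n X)"
  by (induction X arbitrary: k n j) auto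
lemma liftN_substP: "liftN k (substP j Q X) = substP j (liftN k Q) (liftN k X)"
  by (induction X arbitrary: k j Q) (auto simp: liftP_liftN liftN_liftN)
lemma liftP_substN: "liftP k (substN j n X) = substN j n (liftP k X)"
  by (simp add: substN_liftP)
lemma liftP_substP1: "i \<le> k \<Longrightarrow> liftP i (substP k Q X) = substP (Suc k) (liftP i Q) (liftP i X)"
  by (induction X arbitrary: i k Q) (auto simp: liftP_liftP liftP_liftN)
lemma liftP_substP2: "j \<le> i \<Longrightarrow> liftP i (substP j Q X) = substP j (liftP i Q) (liftP (Suc i) X)"
  by (induction X arbitrary: i j Q) (auto simp: liftP_liftP liftP_liftN)
lemma liftN_substN1: "i \<le> k \<Longrightarrow> liftN i (substN k n X) = substN (Suc k) (liftNm i n) (liftN i X)"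
  by (induction X arbitrary: i k n) (auto simp: liftNm_substNm1 liftNm_liftNm)
lemma liftN_substN2: "j \<le> i \<Longrightarrow> liftN i (substN j n X) = substN j (liftNm i n) (liftN (Suc i) X)"
  by (induction X arbitrary: i j n) (auto simp: liftNm_substNm2 liftNm_liftNm)
lemma substN_substP: "substN k n (substP j Q X) = substP j (substN k n Q) (substN k n X)"
  by (induction X arbitrary: k n j Q) (auto simp: substN_liftP liftN_substN1)
lemma substP_substN: "substP k Q (substN j n X) = substN j n (substP k (liftN j Q) X)"
  by (induction X arbitrary: k Q j n) (auto simp: substN_liftN liftN_liftN liftP_liftN)
lemma substP_substP: "j \<le> i \<Longrightarrow> substP i Q (substP j R X) = substP j (substP i Q R) (substP (Suc i) (liftP j Q) X)"
  by (induction X arbitrary: i j Q R) (auto simp: substP_liftP liftP_substP1 liftP_liftP liftN_substP liftP_liftN)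
lemma substN_substN: "j \<le> k \<Longrightarrow> substN k n (substN j m X) = substN j (substNm k n m) (substN (Suc k) (liftNm j n) X)"
  by (induction X arbitrary: j k n m) (auto simp: substNm_substNm liftNm_liftNm liftNm_substNm1)



lemma t_var': "T = G i \<Longrightarrow> typed G (PV i) T"
  using t_var by simp

definition ins :: "nat \<Rightarrow> ty \<Rightarrow> (nat \<Rightarrow> ty) \<Rightarrow> nat \<Rightarrow> ty" where
  "ins k t G = (\<lambda>i. if i < k then G i else if i = k then t else G (i - 1))"
definition del :: "nat \<Rightarrow> (nat \<Rightarrow> ty) \<Rightarrow> nat \<Rightarrow> ty" where
  "del k G = (\<lambda>i. if i < k then G i else G (Suc i))"

lemma ext_ins0: "ext_ctx s G = ins 0 s G"
  by (auto simp: ext_ctx_def ins_def split: nat.split)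
lemma ins_ext: "ins (Suc k) t (ext_ctx s G) = ext_ctx s (ins k t G)"
  by (rule ext) (auto simp: ext_ctx_def ins_def split: nat.split)
lemma del_ext: "del (Suc k) (ext_ctx s G) = ext_ctx s (del k G)"
  by (rule ext) (auto simp: ext_ctx_def del_def split: nat.split)
lemma del0_ext: "del 0 (ext_ctx s G) = G"
  by (rule ext) (auto simp: ext_ctx_def del_def split: nat.split)
lemma ext_Suc: "ext_ctx s G (Suc k) = G k" "ext_ctx s G 0 = s"
  by (auto simp: ext_ctx_def)

lemma typed_liftP: "typed G X s \<Longrightarrow> typed (ins k t G) (liftP k X) s"
proof (induction arbitrary: k rule: typed.induct)
  case (t_var G i)
  then show ?case by (auto simp: ins_def intro!: t_var')
next
  case (t_inp s G P m)
  then show ?case using typed.t_inp[of s "ins k t G"] by (simp add: ins_ext[symmetric])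
next
  case (t_pabs s G P)
  then show ?case using typed.t_pabs[of s "ins k t G"] by (simp add: ins_ext[symmetric])
qed (auto intro: typed.intros)

lemma typed_liftN: "typed G X s \<Longrightarrow> typed G (liftN k X) s"
  by (induction arbitrary: k rule: typed.induct) (auto intro: typed.intros)
lemma typed_substN: "typed G X s \<Longrightarrow> typed G (substN k n X) s"
  by (induction arbitrary: k n rule: typed.induct) (simp_all, (metis typed.intros)+)

lemma typed_substP: "typed G X s \<Longrightarrow> typed (del k G) Q (G k) \<Longrightarrow> typed (del k G) (substP k Q X) s"
proof (induction arbitrary: k Q rule: typed.induct)
  case (t_var G i)
  then show ?case by (auto simp: del_def intro!: t_var')
next
  case (t_inp s G P m)
  have "typed (ext_ctx s (del k G)) (liftP 0 Q) (G k)"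
    using typed_liftP[OF t_inp.prems, of 0 s] by (simp add: ext_ins0)
  then have "typed (ext_ctx s (del k G)) (substP (Suc k) (liftP 0 Q) P) Pr"
    using t_inp.IH[of "Suc k"] by (simp add: del_ext ext_Suc)
  then show ?case by (auto intro: typed.intros)
next
  case (t_pabs s G P)
  have "typed (ext_ctx s (del k G)) (liftP 0 Q) (G k)"
    using typed_liftP[OF t_pabs.prems, of 0 s] by (simp add: ext_ins0)
  then have "typed (ext_ctx s (del k G)) (substP (Suc k) (liftP 0 Q) P) Pr"
    using t_pabs.IH[of "Suc k"] by (simp add: del_ext ext_Suc)
  then show ?case by (auto intro: typed.intros)
next
  case (t_nabs G P)
  then show ?case by (auto intro!: typed.intros typed_liftN)
next
  case (t_papp G P s Q)
  then show ?case by simp (blast intro: typed.t_papp)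
qed (auto intro: typed.intros)

inductive_cases typ_PAbs: "typed G (PAbs X) s"
inductive_cases typ_NAbs: "typed G (NAbs X) s"
inductive_cases typ_Inp: "typed G (Inp m X) s"
inductive_cases typ_Out: "typed G (Out m X) s"
inductive_cases typ_Par: "typed G (Par X Y) s"
inductive_cases typ_PApp: "typed G (PApp X Y) s"
inductive_cases typ_NApp: "typed G (NApp X n) s"
inductive_cases typ_Nil: "typed G Nil s"
inductive_cases typ_PV: "typed G (PV i) s"

lemma typed_betaP: "typed G (PApp (PAbs X) Q) s \<Longrightarrow> typed G (substP 0 Q X) s"
  apply (erule typ_PApp)
  apply (erule typ_PAbs)
  using typed_substP[of "ext_ctx _ G" X Pr 0 Q] by (auto simp: del0_ext ext_Suc)

lemma typed_betaN: "typed G (NApp (NAbs X) n) s \<Longrightarrow> typed G (substN 0 n X) s"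
  by (auto elim!: typ_NApp typ_NAbs intro: typed_substN)

lemma typed_beta: "beta P P' \<Longrightarrow> typed G P s \<Longrightarrow> typed G P' s"
proof (induction arbitrary: G s rule: beta.induct)
  case (b_p P Q) then show ?case by (rule typed_betaP)
next
  case (b_n P n) then show ?case by (rule typed_betaN)
qed (auto elim!: typ_PAbs typ_NAbs typ_Inp typ_Out typ_Par typ_PApp typ_NApp intro: typed.intros)

inductive sub :: "trm \<Rightarrow> trm \<Rightarrow> bool" where
  sub_refl: "sub P P"
| sub_inp: "sub S A \<Longrightarrow> sub S (Inp m A)"
| sub_out: "sub S A \<Longrightarrow> sub S (Out m A)"
| sub_parl: "sub S A \<Longrightarrow> sub S (Par A B)"
| sub_parr: "sub S B \<Longrightarrow> sub S (Par A B)"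
| sub_pabs: "sub S A \<Longrightarrow> sub S (PAbs A)"
| sub_appl: "sub S A \<Longrightarrow> sub S (PApp A B)"
| sub_appr: "sub S B \<Longrightarrow> sub S (PApp A B)"
| sub_nabs: "sub S A \<Longrightarrow> sub S (NAbs A)"
| sub_napp: "sub S A \<Longrightarrow> sub S (NApp A n)"

lemma sub_trans: "sub S P \<Longrightarrow> sub T S \<Longrightarrow> sub T P"
  by (induction rule: sub.induct) (auto intro: sub.intros)

lemma sub_beta: "sub S P \<Longrightarrow> beta S S' \<Longrightarrow> \<exists>P'. beta P P' \<and> sub S' P'"
  by (induction rule: sub.induct) (auto intro: sub.intros beta.intros)

lemma dep_exists_aux:
  assumes "SN P"
  shows "sub S P \<Longrightarrow> typed G S s \<Longrightarrow> \<exists>k. dep S k"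
  using assms
proof (induction arbitrary: S G s rule: SN.induct)
  case (SN_intro P)
  show ?case using SN_intro.prems(1,2)
  proof (induction S arbitrary: G s)
    case Nil then show ?case by (auto intro: dep.intros)
  next
    case (PV x) then show ?case by (auto intro: dep.intros)
  next
    case (Inp m A)
    have "sub A P" using Inp.prems(1) by (rule sub_trans) (auto intro: sub.intros)
    from Inp.prems(2) obtain s' where "typed (ext_ctx s' G) A Pr" by (auto elim: typ_Inp)
    with Inp.IH[OF \<open>sub A P\<close>] obtain k where "dep A k" by blast
    then show ?case by (blast intro: d_inp)
  next
    case (Out m A)
    have "sub A P" using Out.prems(1) by (rule sub_trans) (auto intro: sub.intros)
    from Out.prems(2) obtain s' where "typed G A s'" by (auto elim: typ_Out)
    with Out.IH[OF \<open>sub A P\<close>] obtain k where "dep A k" by blast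
    then show ?case by (blast intro: d_out)
  next
    case (Par A B)
    have "sub A P" using Par.prems(1) by (rule sub_trans) (auto intro: sub.intros)
    moreover have "sub B P" using Par.prems(1) by (rule sub_trans) (auto intro: sub.intros)
    moreover from Par.prems(2) have "typed G A Pr" "typed G B Pr" by (auto elim: typ_Par)
    ultimately obtain k1 k2 where "dep A k1" "dep B k2" using Par.IH by blast
    then show ?case by (blast intro: d_par)
  next
    case (PAbs A)
    have "sub A P" using PAbs.prems(1) by (rule sub_trans) (auto intro: sub.intros)
    from PAbs.prems(2) obtain s' where "typed (ext_ctx s' G) A Pr" by (auto elim: typ_PAbs)
    with PAbs.IH[OF \<open>sub A P\<close>] obtain k where "dep A k" by blast
    then show ?case by (blast intro: d_pabs)
  next
    case (NAbs A)
    have "sub A P" using NAbs.prems(1) by (rule sub_trans) (auto intro: sub.intros)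
    from NAbs.prems(2) have "typed G A Pr" by (auto elim: typ_NAbs)
    with NAbs.IH[OF \<open>sub A P\<close>] obtain k where "dep A k" by blast
    then show ?case by (blast intro: d_nabs)
  next
    case (PApp A B)
    have sB: "sub B P" using PApp.prems(1) by (rule sub_trans) (auto intro: sub.intros)
    from PApp.prems(2) obtain t where tA: "typed G A (PArrT t)" and tB: "typed G B t"
      by (auto elim: typ_PApp)
    show ?case
    proof (cases A)
      case (PV i)
      with PApp.IH(2)[OF sB tB] show ?thesis by (auto intro: dep.intros)
    next
      case (PAbs X)
      have "beta (PApp A B) (substP 0 B X)" using PAbs by (auto intro: beta.intros)
      from sub_beta[OF PApp.prems(1) this] obtain P' where "beta P P'" "sub (substP 0 B X) P'" by blast
      moreover have "typed G (substP 0 B X) s" using typed_betaP PApp.prems(2) PAbs by blast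
      ultimately obtain k where "dep (substP 0 B X) k" using SN_intro.IH by blast
      then show ?thesis using PAbs by (auto intro: dep.intros)
    qed (use tA in \<open>auto elim: typ_Nil typ_Inp typ_Out typ_Par typ_PApp typ_NApp typ_NAbs\<close>)
  next
    case (NApp A n)
    from NApp.prems(2) have tA: "typed G A NArrT" by (auto elim: typ_NApp)
    show ?case
    proof (cases A)
      case (PV i)
      then show ?thesis by (auto intro: dep.intros)
    next
      case (NAbs X)
      have "beta (NApp A n) (substN 0 n X)" using NAbs by (auto intro: beta.intros)
      from sub_beta[OF NApp.prems(1) this] obtain P' where "beta P P'" "sub (substN 0 n X) P'" by blast
      moreover have "typed G (substN 0 n X) s" using typed_betaN NApp.prems(2) NAbs by blast
      ultimately obtain k where "dep (substN 0 n X) k" using SN_intro.IH by blast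
      then show ?thesis using NAbs by (auto intro: dep.intros)
    qed (use tA in \<open>auto elim: typ_Nil typ_Inp typ_Out typ_Par typ_PApp typ_NApp typ_PAbs\<close>)
  qed
qed

lemma dep_exists: "SN P \<Longrightarrow> typed G P s \<Longrightarrow> \<exists>k. dep P k"
  using dep_exists_aux sub_refl by blast

inductive_cases dep_Nil: "dep Nil k"
inductive_cases dep_PV: "dep (PV i) k"
inductive_cases dep_Inp: "dep (Inp m X) k"
inductive_cases dep_Out: "dep (Out m X) k"
inductive_cases dep_Par: "dep (Par X Y) k"
inductive_cases dep_PAbs: "dep (PAbs X) k"
inductive_cases dep_NAbs: "dep (NAbs X) k"
inductive_cases dep_PApp: "dep (PApp X Y) k"
inductive_cases dep_NApp: "dep (NApp X n) k"

lemma dep_fun: "dep P k \<Longrightarrow> dep P k' \<Longrightarrow> k = k'"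
proof (induction arbitrary: k' rule: dep.induct)
  case d_nil then show ?case by (blast elim: dep_Nil)
next
  case d_var then show ?case by (auto elim: dep_PV)
next
  case (d_inp P k m) from d_inp.prems show ?case by (rule dep_Inp) (simp add: d_inp.IH)
next
  case (d_out P k m) from d_out.prems show ?case by (rule dep_Out) (simp add: d_out.IH)
next
  case (d_par P1 k1 P2 k2) from d_par.prems show ?case by (rule dep_Par) (simp add: d_par.IH)
next
  case (d_pabs P k) from d_pabs.prems show ?case by (rule dep_PAbs) (simp add: d_pabs.IH)
next
  case (d_nabs P k) from d_nabs.prems show ?case by (rule dep_NAbs) (simp add: d_nabs.IH)
next
  case (d_vapp P k i) from d_vapp.prems show ?case by (rule dep_PApp) (simp_all add: d_vapp.IH)
next
  case (d_betaP P2 P3 k) from d_betaP.prems show ?case by (rule dep_PApp) (simp_all add: d_betaP.IH)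
next
  case (d_vnapp i n) from d_vnapp.prems show ?case by (rule dep_NApp) simp_all
next
  case (d_betaN n P3 k) from d_betaN.prems show ?case by (rule dep_NApp) (simp_all add: d_betaN.IH)
qed

lemma depth_eq: "dep P k \<Longrightarrow> depth P = k"
  unfolding depth_def using dep_fun by blast



inductive pr :: "trm \<Rightarrow> trm \<Rightarrow> bool" where
  pr_nil: "pr Nil Nil"
| pr_var: "pr (PV i) (PV i)"
| pr_inp: "pr P P' \<Longrightarrow> pr (Inp m P) (Inp m P')"
| pr_out: "pr P P' \<Longrightarrow> pr (Out m P) (Out m P')"
| pr_par: "pr P P' \<Longrightarrow> pr Q Q' \<Longrightarrow> pr (Par P Q) (Par P' Q')"
| pr_pabs: "pr P P' \<Longrightarrow> pr (PAbs P) (PAbs P')"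
| pr_papp: "pr P P' \<Longrightarrow> pr Q Q' \<Longrightarrow> pr (PApp P Q) (PApp P' Q')"
| pr_nabs: "pr P P' \<Longrightarrow> pr (NAbs P) (NAbs P')"
| pr_napp: "pr P P' \<Longrightarrow> pr (NApp P n) (NApp P' n)"
| pr_beta: "pr X X' \<Longrightarrow> pr Q Q' \<Longrightarrow> pr (PApp (PAbs X) Q) (substP 0 Q' X')"
| pr_betaN: "pr X X' \<Longrightarrow> pr (NApp (NAbs X) n) (substN 0 n X')"
| pr_nilr: "pr P P' \<Longrightarrow> pr (Par P Nil) P'"
| pr_nill: "pr P P' \<Longrightarrow> pr (Par Nil P) P'"

lemma pr_refl[simp,intro]: "pr P P"
  by (induction P) (auto intro: pr.intros)

lemma pr_liftP: "pr X X' \<Longrightarrow> pr (liftP k X) (liftP k X')"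
proof (induction arbitrary: k rule: pr.induct)
  case (pr_beta X X' Q Q')
  then show ?case using pr.pr_beta[of "liftP (Suc k) X" "liftP (Suc k) X'" "liftP k Q" "liftP k Q'"]
    by (simp add: liftP_substP2)
next
  case (pr_betaN X X' n)
  then show ?case by (auto simp: liftP_substN intro: pr.intros)
qed (auto intro: pr.intros)

lemma pr_liftN: "pr X X' \<Longrightarrow> pr (liftN k X) (liftN k X')"
proof (induction arbitrary: k rule: pr.induct)
  case (pr_beta X X' Q Q')
  then show ?case by (auto simp: liftN_substP intro: pr.intros)
next
  case (pr_betaN X X' n)
  then show ?case using pr.pr_betaN[of "liftN (Suc k) X" "liftN (Suc k) X'" "liftNm k n"]
    by (simp add: liftN_substN2)
qed (auto intro: pr.intros)

lemma pr_substP: "pr X X' \<Longrightarrow> pr Q Q' \<Longrightarrow> pr (substP k Q X) (substP k Q' X')"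
proof (induction arbitrary: k Q Q' rule: pr.induct)
  case (pr_beta X X' R R')
  have "pr (substP (Suc k) (liftP 0 Q) X) (substP (Suc k) (liftP 0 Q') X')"
    using pr_beta.IH(1) pr_liftP pr_beta.prems by blast
  moreover have "pr (substP k Q R) (substP k Q' R')" using pr_beta.IH(2) pr_beta.prems by blast
  ultimately have "pr (substP k Q (PApp (PAbs X) R)) (substP 0 (substP k Q' R') (substP (Suc k) (liftP 0 Q') X'))"
    by (simp add: pr.pr_beta)
  then show ?case by (simp add: substP_substP)
next
  case (pr_betaN X X' n)
  have "pr (substP k (liftN 0 Q) X) (substP k (liftN 0 Q') X')"
    using pr_betaN.IH pr_liftN pr_betaN.prems by blast
  then have "pr (substP k Q (NApp (NAbs X) n)) (substN 0 n (substP k (liftN 0 Q') X'))"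
    by (simp add: pr.pr_betaN)
  then show ?case by (simp add: substP_substN)
next
  case (pr_inp P P' m) then show ?case by (simp add: pr.pr_inp pr_liftP)
next
  case (pr_pabs P P') then show ?case by (simp add: pr.pr_pabs pr_liftP)
next
  case (pr_nabs P P') then show ?case by (simp add: pr.pr_nabs pr_liftN)
qed (auto intro: pr.intros pr_liftP pr_liftN)

lemma pr_substN: "pr X X' \<Longrightarrow> pr (substN k n X) (substN k n X')"
proof (induction arbitrary: k n rule: pr.induct)
  case (pr_beta X X' R R')
  then show ?case by (auto simp: substN_substP intro!: pr.intros)
next
  case (pr_betaN X X' m)
  have "pr (substN k n (NApp (NAbs X) m)) (substN 0 (substNm k n m) (substN (Suc k) (liftNm 0 n) X'))"
    using pr_betaN by (auto intro!: pr.intros)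
  then show ?case by (simp add: substN_substN)
qed (auto intro!: pr.intros)

inductive_cases pr_NilE: "pr Nil B"
inductive_cases pr_PVE: "pr (PV i) B"
inductive_cases pr_InpE: "pr (Inp m A) B"
inductive_cases pr_OutE: "pr (Out m A) B"
inductive_cases pr_PAbsE: "pr (PAbs A) B"
inductive_cases pr_NAbsE: "pr (NAbs A) B"
inductive_cases pr_ParE: "pr (Par A C) B"
inductive_cases pr_PAppE: "pr (PApp A C) B"
inductive_cases pr_NAppE: "pr (NApp A n) B"

fun dev :: "trm \<Rightarrow> trm" where
  "dev Nil = Nil"
| "dev (PV i) = PV i"
| "dev (Inp m P) = Inp m (dev P)"
| "dev (Out m P) = Out m (dev P)"
| "dev (Par P Q) = (if Q = Nil then dev P else if P = Nil then dev Q else Par (dev P) (dev Q))"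
| "dev (PAbs P) = PAbs (dev P)"
| "dev (PApp P Q) = (case P of PAbs X \<Rightarrow> substP 0 (dev Q) (dev X) | _ \<Rightarrow> PApp (dev P) (dev Q))"
| "dev (NAbs P) = NAbs (dev P)"
| "dev (NApp P n) = (case P of NAbs X \<Rightarrow> substN 0 n (dev X) | _ \<Rightarrow> NApp (dev P) n)"

lemma pr_dev: "pr P Q \<Longrightarrow> pr Q (dev P)"
proof (induction rule: pr.induct)
  case (pr_par P P' Q Q')
  then show ?case
    by (auto elim!: pr_NilE intro: pr.intros)
next
  case (pr_papp P P' Q Q')
  show ?case
  proof (cases "\<exists>X. P = PAbs X")
    case True
    then obtain X where X: "P = PAbs X" by blast
    with pr_papp.hyps(1) obtain X' where X': "P' = PAbs X'" "pr X X'" by (auto elim: pr_PAbsE)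
    from pr_papp.IH(1) X X' have "pr X' (dev X)" by (auto elim: pr_PAbsE)
    then show ?thesis using X X' pr_papp.IH(2) by (auto intro: pr.intros)
  next
    case False
    then show ?thesis using pr_papp.IH by (cases P) (auto intro: pr.intros)
  qed
next
  case (pr_napp P P' n)
  show ?case
  proof (cases "\<exists>X. P = NAbs X")
    case True
    then obtain X where X: "P = NAbs X" by blast
    with pr_napp.hyps(1) obtain X' where X': "P' = NAbs X'" "pr X X'" by (auto elim: pr_NAbsE)
    from pr_napp.IH(1) X X' have "pr X' (dev X)" by (auto elim: pr_NAbsE)
    then show ?thesis using X X' by (auto intro: pr.intros)
  next
    case False
    then show ?thesis using pr_napp.IH by (cases P) (auto intro: pr.intros)
  qed
next
  case (pr_beta X X' Q Q')
  then show ?case by (auto intro: pr_substP)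
next
  case (pr_betaN X X' n)
  then show ?case by (auto intro: pr_substN)
next
  case (pr_nill P P')
  then show ?case by (cases "P = Nil") auto
qed (auto intro: pr.intros)

lemma pr_diamond: "pr P Q1 \<Longrightarrow> pr P Q2 \<Longrightarrow> \<exists>S. pr Q1 S \<and> pr Q2 S"
  using pr_dev by blast

abbreviation prs where "prs \<equiv> pr\<^sup>*\<^sup>*"

lemma pr_strip: "prs P R \<Longrightarrow> pr P Q \<Longrightarrow> \<exists>S. prs Q S \<and> pr R S"
proof (induction arbitrary: Q rule: rtranclp_induct)
  case base then show ?case by blast
next
  case (step y z)
  then obtain S where "prs Q S" "pr y S" by blast
  with step.hyps(2) obtain T where "pr S T" "pr z T" using pr_diamond by blast
  then show ?case using \<open>prs Q S\<close> by (meson rtranclp.rtrancl_into_rtrancl)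
qed

lemma prs_confl: "prs P Q \<Longrightarrow> prs P R \<Longrightarrow> \<exists>S. prs Q S \<and> prs R S"
proof (induction arbitrary: R rule: rtranclp_induct)
  case base then show ?case by blast
next
  case (step y z)
  then obtain S where "prs y S" "prs R S" by blast
  from pr_strip[OF this(1) step.hyps(2)] obtain T where "prs z T" "pr S T" by blast
  then show ?case using \<open>prs R S\<close> by (meson rtranclp.rtrancl_into_rtrancl)
qed

lemma prs_lift1: "prs A A' \<Longrightarrow> (\<And>x y. pr x y \<Longrightarrow> pr (f x) (f y)) \<Longrightarrow> prs (f A) (f A')"
  by (induction rule: rtranclp_induct) (auto intro: rtranclp.rtrancl_into_rtrancl)

lemma prs_Inp: "prs A A' \<Longrightarrow> prs (Inp m A) (Inp m A')"
  by (erule prs_lift1) (auto intro: pr.intros)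
lemma prs_Out: "prs A A' \<Longrightarrow> prs (Out m A) (Out m A')"
  by (erule prs_lift1) (auto intro: pr.intros)
lemma prs_PAbs: "prs A A' \<Longrightarrow> prs (PAbs A) (PAbs A')"
  by (erule prs_lift1) (auto intro: pr.intros)
lemma prs_NAbs: "prs A A' \<Longrightarrow> prs (NAbs A) (NAbs A')"
  by (erule prs_lift1) (auto intro: pr.intros)
lemma prs_NApp: "prs A A' \<Longrightarrow> prs (NApp A n) (NApp A' n)"
  by (erule prs_lift1) (auto intro: pr.intros)
lemma prs_liftP: "prs A A' \<Longrightarrow> prs (liftP k A) (liftP k A')"
  by (erule prs_lift1) (auto intro: pr_liftP)
lemma prs_Par: "prs A A' \<Longrightarrow> prs B B' \<Longrightarrow> prs (Par A B) (Par A' B')"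
proof -
  assume a: "prs A A'" and b: "prs B B'"
  have "prs (Par A B) (Par A' B)" using a by (rule prs_lift1) (auto intro: pr.intros)
  moreover have "prs (Par A' B) (Par A' B')" using b by (rule prs_lift1) (auto intro: pr.intros)
  ultimately show ?thesis by simp
qed
lemma prs_PApp: "prs A A' \<Longrightarrow> prs B B' \<Longrightarrow> prs (PApp A B) (PApp A' B')"
proof -
  assume a: "prs A A'" and b: "prs B B'"
  have "prs (PApp A B) (PApp A' B)" using a by (rule prs_lift1) (auto intro: pr.intros)
  moreover have "prs (PApp A' B) (PApp A' B')" using b by (rule prs_lift1) (auto intro: pr.intros)
  ultimately show ?thesis by simp
qed


lemma prs_PAbsE: "prs (PAbs A) B \<Longrightarrow> \<exists>A'. B = PAbs A' \<and> prs A A'"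
proof (induction rule: rtranclp_induct)
  case (step y z) then show ?case by (auto elim!: pr_PAbsE intro: rtranclp.rtrancl_into_rtrancl)
qed auto
lemma prs_NAbsE: "prs (NAbs A) B \<Longrightarrow> \<exists>A'. B = NAbs A' \<and> prs A A'"
proof (induction rule: rtranclp_induct)
  case (step y z) then show ?case by (auto elim!: pr_NAbsE intro: rtranclp.rtrancl_into_rtrancl)
qed auto
lemma prs_InpE: "prs (Inp m A) B \<Longrightarrow> \<exists>A'. B = Inp m A' \<and> prs A A'"
proof (induction rule: rtranclp_induct)
  case (step y z) then show ?case by (auto elim!: pr_InpE intro: rtranclp.rtrancl_into_rtrancl)
qed auto
lemma prs_OutE: "prs (Out m A) B \<Longrightarrow> \<exists>A'. B = Out m A' \<and> prs A A'"
proof (induction rule: rtranclp_induct)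
  case (step y z) then show ?case by (auto elim!: pr_OutE intro: rtranclp.rtrancl_into_rtrancl)
qed auto
lemma prs_NilE: "prs Nil B \<Longrightarrow> B = Nil"
proof (induction rule: rtranclp_induct)
  case (step y z) then show ?case by (auto elim!: pr_NilE)
qed auto
lemma prs_PVE: "prs (PV i) B \<Longrightarrow> B = PV i"
proof (induction rule: rtranclp_induct)
  case (step y z) then show ?case by (auto elim!: pr_PVE)
qed auto
lemma prs_VAppE: "prs (PApp (PV i) A) B \<Longrightarrow> \<exists>A'. B = PApp (PV i) A' \<and> prs A A'"
proof (induction rule: rtranclp_induct)
  case (step y z) then show ?case by (auto elim!: pr_PAppE pr_PVE intro: rtranclp.rtrancl_into_rtrancl)
qed auto
lemma prs_VNAppE: "prs (NApp (PV i) n) B \<Longrightarrow> B = NApp (PV i) n"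
proof (induction rule: rtranclp_induct)
  case (step y z) then show ?case by (auto elim!: pr_NAppE pr_PVE)
qed auto



inductive acp :: "trm \<Rightarrow> trm \<Rightarrow> bool" where
  ac_nil: "acp Nil Nil"
| ac_var: "acp (PV i) (PV i)"
| ac_inp: "acp P P' \<Longrightarrow> acp (Inp m P) (Inp m P')"
| ac_out: "acp P P' \<Longrightarrow> acp (Out m P) (Out m P')"
| ac_par: "acp P P' \<Longrightarrow> acp Q Q' \<Longrightarrow> acp (Par P Q) (Par P' Q')"
| ac_pabs: "acp P P' \<Longrightarrow> acp (PAbs P) (PAbs P')"
| ac_papp: "acp P P' \<Longrightarrow> acp Q Q' \<Longrightarrow> acp (PApp P Q) (PApp P' Q')"
| ac_nabs: "acp P P' \<Longrightarrow> acp (NAbs P) (NAbs P')"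
| ac_napp: "acp P P' \<Longrightarrow> acp (NApp P n) (NApp P' n)"
| ac_assoc: "acp A A' \<Longrightarrow> acp B B' \<Longrightarrow> acp C C' \<Longrightarrow> acp (Par (Par A B) C) (Par A' (Par B' C'))"
| ac_assoc2: "acp A A' \<Longrightarrow> acp B B' \<Longrightarrow> acp C C' \<Longrightarrow> acp (Par A (Par B C)) (Par (Par A' B') C')"
| ac_comm: "acp A A' \<Longrightarrow> acp B B' \<Longrightarrow> acp (Par A B) (Par B' A')"

lemma acp_refl[simp,intro]: "acp P P"
  by (induction P) (auto intro: acp.intros)

lemma acp_sym: "acp P Q \<Longrightarrow> acp Q P"
  by (induction rule: acp.induct) (auto intro: acp.intros)

lemma acp_liftP: "acp X X' \<Longrightarrow> acp (liftP k X) (liftP k X')"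
  by (induction arbitrary: k rule: acp.induct) (auto intro: acp.intros)
lemma acp_liftN: "acp X X' \<Longrightarrow> acp (liftN k X) (liftN k X')"
  by (induction arbitrary: k rule: acp.induct) (auto intro: acp.intros)
lemma acp_substN: "acp X X' \<Longrightarrow> acp (substN k n X) (substN k n X')"
  by (induction arbitrary: k n rule: acp.induct) (auto intro: acp.intros)
lemma acp_substP: "acp X X' \<Longrightarrow> acp Q Q' \<Longrightarrow> acp (substP k Q X) (substP k Q' X')"
proof (induction arbitrary: k Q Q' rule: acp.induct)
  case (ac_inp P P' m) then show ?case by (simp add: acp.ac_inp acp_liftP)
next
  case (ac_pabs P P') then show ?case by (simp add: acp.ac_pabs acp_liftP)
next
  case (ac_nabs P P') then show ?case by (simp add: acp.ac_nabs acp_liftN)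
qed (auto intro: acp.intros)

inductive_cases acp_NilE: "acp Nil B"
inductive_cases acp_NilE2: "acp B Nil"
inductive_cases acp_PVE: "acp (PV i) B"
inductive_cases acp_InpE: "acp (Inp m A) B"
inductive_cases acp_OutE: "acp (Out m A) B"
inductive_cases acp_PAbsE: "acp (PAbs A) B"
inductive_cases acp_PAbsE2: "acp B (PAbs A)"
inductive_cases acp_NAbsE: "acp (NAbs A) B"
inductive_cases acp_NAbsE2: "acp B (NAbs A)"
inductive_cases acp_ParE: "acp (Par A C) B"
inductive_cases acp_PAppE: "acp (PApp A C) B"
inductive_cases acp_NAppE: "acp (NApp A n) B"

lemma pr_Par_cases: "pr (Par A B) P'' \<Longrightarrow>
   (\<exists>A'' B''. P'' = Par A'' B'' \<and> pr A A'' \<and> pr B B'') \<or> (B = Nil \<and> pr A P'') \<or> (A = Nil \<and> pr B P'')"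
  by (erule pr_ParE) auto

lemma pr_PApp_cases: "pr (PApp X Y) P'' \<Longrightarrow>
   (\<exists>X'' Y''. P'' = PApp X'' Y'' \<and> pr X X'' \<and> pr Y Y'') \<or>
   (\<exists>Z Z'' Y''. X = PAbs Z \<and> P'' = substP 0 Y'' Z'' \<and> pr Z Z'' \<and> pr Y Y'')"
  by (erule pr_PAppE) auto

lemma pr_NApp_cases: "pr (NApp X n) P'' \<Longrightarrow>
   (\<exists>X''. P'' = NApp X'' n \<and> pr X X'') \<or>
   (\<exists>Z Z''. X = NAbs Z \<and> P'' = substN 0 n Z'' \<and> pr Z Z'')"
  by (erule pr_NAppE) auto

lemma prs_step: "pr x y \<Longrightarrow> prs y z \<Longrightarrow> prs x z"
  by (rule converse_rtranclp_into_rtranclp)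

lemma comm1: "acp P P' \<Longrightarrow> pr P' P'' \<Longrightarrow> \<exists>Q. prs P Q \<and> acp Q P''"
proof (induction arbitrary: P'' rule: acp.induct)
  case ac_nil then show ?case by (auto elim: pr_NilE)
next
  case ac_var then show ?case by (auto elim: pr_PVE)
next
  case (ac_inp P P' m)
  then obtain A where "P'' = Inp m A" "pr P' A" by (auto elim: pr_InpE)
  with ac_inp.IH obtain Q where "prs P Q" "acp Q A" by blast
  then show ?case using \<open>P'' = _\<close> by (blast intro: prs_Inp acp.intros)
next
  case (ac_out P P' m)
  then obtain A where "P'' = Out m A" "pr P' A" by (auto elim: pr_OutE)
  with ac_out.IH obtain Q where "prs P Q" "acp Q A" by blast
  then show ?case using \<open>P'' = _\<close> by (blast intro: prs_Out acp.intros)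
next
  case (ac_pabs P P')
  then obtain A where "P'' = PAbs A" "pr P' A" by (auto elim: pr_PAbsE)
  with ac_pabs.IH obtain Q where "prs P Q" "acp Q A" by blast
  then show ?case using \<open>P'' = _\<close> by (blast intro: prs_PAbs acp.intros)
next
  case (ac_nabs P P')
  then obtain A where "P'' = NAbs A" "pr P' A" by (auto elim: pr_NAbsE)
  with ac_nabs.IH obtain Q where "prs P Q" "acp Q A" by blast
  then show ?case using \<open>P'' = _\<close> by (blast intro: prs_NAbs acp.intros)
next
  case (ac_par A A' B B')
  from pr_Par_cases[OF ac_par.prems] show ?case
  proof (elim disjE exE conjE)
    fix A'' B'' assume "P'' = Par A'' B''" "pr A' A''" "pr B' B''"
    then show ?thesis using ac_par.IH by (meson acp.ac_par prs_Par)
  next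
    assume "B' = Nil" "pr A' P''"
    then have "B = Nil" using ac_par.hyps(2) by (auto elim: acp_NilE2)
    obtain Q where "prs A Q" "acp Q P''" using ac_par.IH(1) \<open>pr A' P''\<close> by blast
    moreover have "pr (Par A B) A" using \<open>B = Nil\<close> by (auto intro: pr.intros)
    ultimately show ?thesis by (meson prs_step)
  next
    assume "A' = Nil" "pr B' P''"
    then have "A = Nil" using ac_par.hyps(1) by (auto elim: acp_NilE2)
    obtain Q where "prs B Q" "acp Q P''" using ac_par.IH(2) \<open>pr B' P''\<close> by blast
    moreover have "pr (Par A B) B" using \<open>A = Nil\<close> by (auto intro: pr.intros)
    ultimately show ?thesis by (meson prs_step)
  qed
next
  case (ac_papp X Xa Y Ya)
  from pr_PApp_cases[OF ac_papp.prems] show ?case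
  proof (elim disjE exE conjE)
    fix P' Q' assume "P'' = PApp P' Q'" "pr Xa P'" "pr Ya Q'"
    then show ?thesis using ac_papp.IH by (meson acp.ac_papp prs_PApp)
  next
    fix Z' Z'' Q' assume 2: "Xa = PAbs Z'" "P'' = substP 0 Q' Z''" "pr Z' Z''" "pr Ya Q'"
    obtain Z where Z: "X = PAbs Z" "acp Z Z'" using ac_papp.hyps(1) 2 by (auto elim: acp_PAbsE2)
    obtain Q1 where "prs X Q1" "acp Q1 (PAbs Z'')" using ac_papp.IH(1)[of "PAbs Z''"] 2 by (auto intro: pr.intros)
    then obtain Zq where Zq: "Q1 = PAbs Zq" "prs Z Zq" "acp Zq Z''" using Z
      by (auto dest!: prs_PAbsE elim: acp_PAbsE)
    obtain Yq where Yq: "prs Y Yq" "acp Yq Q'" using ac_papp.IH(2) 2 by blast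
    have "prs (PApp X Y) (PApp (PAbs Zq) Yq)" using Z Zq Yq by (auto intro: prs_PApp prs_PAbs)
    moreover have "pr (PApp (PAbs Zq) Yq) (substP 0 Yq Zq)" by (auto intro: pr.intros)
    ultimately have "prs (PApp X Y) (substP 0 Yq Zq)" by simp
    moreover have "acp (substP 0 Yq Zq) (substP 0 Q' Z'')" using Zq Yq by (simp add: acp_substP)
    ultimately show ?thesis using 2 by blast
  qed
next
  case (ac_napp X Xa n)
  from pr_NApp_cases[OF ac_napp.prems] show ?case
  proof (elim disjE exE conjE)
    fix P' assume "P'' = NApp P' n" "pr Xa P'"
    then show ?thesis using ac_napp.IH by (meson acp.ac_napp prs_NApp)
  next
    fix Z' Z'' assume 2: "Xa = NAbs Z'" "P'' = substN 0 n Z''" "pr Z' Z''"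
    obtain Z where Z: "X = NAbs Z" "acp Z Z'" using ac_napp.hyps(1) 2 by (auto elim: acp_NAbsE2)
    obtain Q1 where "prs X Q1" "acp Q1 (NAbs Z'')" using ac_napp.IH[of "NAbs Z''"] 2 by (auto intro: pr.intros)
    then obtain Zq where Zq: "Q1 = NAbs Zq" "prs Z Zq" "acp Zq Z''" using Z
      by (auto dest!: prs_NAbsE elim: acp_NAbsE)
    have "prs (NApp X n) (NApp (NAbs Zq) n)" using Z Zq by (auto intro: prs_NApp prs_NAbs)
    moreover have "pr (NApp (NAbs Zq) n) (substN 0 n Zq)" by (auto intro: pr.intros)
    ultimately have "prs (NApp X n) (substN 0 n Zq)" by simp
    moreover have "acp (substN 0 n Zq) (substN 0 n Z'')" using Zq by (simp add: acp_substN)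
    ultimately show ?thesis using 2 by blast
  qed
next
  case (ac_assoc A A' B B' C C')
  from pr_Par_cases[OF ac_assoc.prems] show ?case
  proof (elim disjE exE conjE)
    fix A'' W assume P'': "P'' = Par A'' W" and pA: "pr A' A''" and pW: "pr (Par B' C') W"
    obtain Aq where Aq: "prs A Aq" "acp Aq A''" using ac_assoc.IH(1) pA by blast
    from pr_Par_cases[OF pW] show ?thesis
    proof (elim disjE exE conjE)
      fix B'' C'' assume "W = Par B'' C''" "pr B' B''" "pr C' C''"
      then show ?thesis using ac_assoc.IH Aq P'' by (meson acp.ac_assoc prs_Par)
    next
      assume "C' = Nil" "pr B' W"
      then have "C = Nil" using ac_assoc.hyps(3) by (auto elim: acp_NilE2)
      obtain Bq where Bq: "prs B Bq" "acp Bq W" using ac_assoc.IH(2) \<open>pr B' W\<close> by blast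
      have "pr (Par (Par A B) C) (Par A B)" using \<open>C = Nil\<close> by (auto intro: pr.intros)
      then have "prs (Par (Par A B) C) (Par Aq Bq)" using Aq Bq by (meson prs_Par prs_step)
      then show ?thesis using Aq Bq P'' by (blast intro: acp.intros)
    next
      assume "B' = Nil" "pr C' W"
      then have "B = Nil" using ac_assoc.hyps(2) by (auto elim: acp_NilE2)
      obtain Cq where Cq: "prs C Cq" "acp Cq W" using ac_assoc.IH(3) \<open>pr C' W\<close> by blast
      have "pr (Par (Par A B) C) (Par A C)" using \<open>B = Nil\<close> by (auto intro: pr.intros)
      then have "prs (Par (Par A B) C) (Par Aq Cq)" using Aq Cq by (meson prs_Par prs_step)
      then show ?thesis using Aq Cq P'' by (blast intro: acp.intros)
    qed
  next
    assume "Par B' C' = Nil" then show ?thesis by simp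
  next
    assume "A' = Nil" and pW: "pr (Par B' C') P''"
    then have "A = Nil" using ac_assoc.hyps(1) by (auto elim: acp_NilE2)
    from pr_Par_cases[OF pW] show ?thesis
    proof (elim disjE exE conjE)
      fix B'' C'' assume "P'' = Par B'' C''" "pr B' B''" "pr C' C''"
      moreover have "pr (Par (Par A B) C) (Par B C)" using \<open>A = Nil\<close> by (auto intro: pr.intros)
      ultimately show ?thesis using ac_assoc.IH by (meson acp.ac_par prs_Par prs_step)
    next
      assume "C' = Nil" "pr B' P''"
      then have "C = Nil" using ac_assoc.hyps(3) by (auto elim: acp_NilE2)
      obtain Bq where Bq: "prs B Bq" "acp Bq P''" using ac_assoc.IH(2) \<open>pr B' P''\<close> by blast
      have "pr (Par (Par A B) C) (Par A B)" using \<open>C = Nil\<close> by (auto intro: pr.intros)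
      moreover have "pr (Par A B) B" using \<open>A = Nil\<close> by (auto intro: pr.intros)
      ultimately show ?thesis using Bq by (meson prs_step)
    next
      assume "B' = Nil" "pr C' P''"
      then have "B = Nil" using ac_assoc.hyps(2) by (auto elim: acp_NilE2)
      obtain Cq where Cq: "prs C Cq" "acp Cq P''" using ac_assoc.IH(3) \<open>pr C' P''\<close> by blast
      have "pr (Par (Par A B) C) (Par Nil C)" using \<open>A = Nil\<close> \<open>B = Nil\<close> by (auto intro: pr.intros)
      moreover have "pr (Par Nil C) C" by (auto intro: pr.intros)
      ultimately show ?thesis using Cq by (meson prs_step)
    qed
  qed
next
  case (ac_assoc2 A A' B B' C C')
  from pr_Par_cases[OF ac_assoc2.prems] show ?case
  proof (elim disjE exE conjE)
    fix W C'' assume P'': "P'' = Par W C''" and pW: "pr (Par A' B') W" and pC: "pr C' C''"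
    obtain Cq where Cq: "prs C Cq" "acp Cq C''" using ac_assoc2.IH(3) pC by blast
    from pr_Par_cases[OF pW] show ?thesis
    proof (elim disjE exE conjE)
      fix A'' B'' assume "W = Par A'' B''" "pr A' A''" "pr B' B''"
      then show ?thesis using ac_assoc2.IH Cq P'' by (meson acp.ac_assoc2 prs_Par)
    next
      assume "B' = Nil" "pr A' W"
      then have "B = Nil" using ac_assoc2.hyps(2) by (auto elim: acp_NilE2)
      obtain Aq where Aq: "prs A Aq" "acp Aq W" using ac_assoc2.IH(1) \<open>pr A' W\<close> by blast
      have "pr (Par A (Par B C)) (Par A C)" using \<open>B = Nil\<close> by (auto intro: pr.intros)
      then have "prs (Par A (Par B C)) (Par Aq Cq)" using Aq Cq by (meson prs_Par prs_step)
      then show ?thesis using Aq Cq P'' by (blast intro: acp.intros)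
    next
      assume "A' = Nil" "pr B' W"
      then have "A = Nil" using ac_assoc2.hyps(1) by (auto elim: acp_NilE2)
      obtain Bq where Bq: "prs B Bq" "acp Bq W" using ac_assoc2.IH(2) \<open>pr B' W\<close> by blast
      have "pr (Par A (Par B C)) (Par B C)" using \<open>A = Nil\<close> by (auto intro: pr.intros)
      then have "prs (Par A (Par B C)) (Par Bq Cq)" using Bq Cq by (meson prs_Par prs_step)
      then show ?thesis using Bq Cq P'' by (blast intro: acp.intros)
    qed
  next
    assume "C' = Nil" and pW: "pr (Par A' B') P''"
    then have "C = Nil" using ac_assoc2.hyps(3) by (auto elim: acp_NilE2)
    from pr_Par_cases[OF pW] show ?thesis
    proof (elim disjE exE conjE)
      fix A'' B'' assume "P'' = Par A'' B''" "pr A' A''" "pr B' B''"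
      moreover have "pr (Par A (Par B C)) (Par A B)" using \<open>C = Nil\<close> by (auto intro: pr.intros)
      ultimately show ?thesis using ac_assoc2.IH by (meson acp.ac_par prs_Par prs_step)
    next
      assume "B' = Nil" "pr A' P''"
      then have "B = Nil" using ac_assoc2.hyps(2) by (auto elim: acp_NilE2)
      obtain Aq where Aq: "prs A Aq" "acp Aq P''" using ac_assoc2.IH(1) \<open>pr A' P''\<close> by blast
      have "pr (Par A (Par B C)) (Par A Nil)" using \<open>C = Nil\<close> \<open>B = Nil\<close> by (auto intro: pr.intros)
      moreover have "pr (Par A Nil) A" by (auto intro: pr.intros)
      ultimately show ?thesis using Aq by (meson prs_step)
    next
      assume "A' = Nil" "pr B' P''"
      then have "A = Nil" using ac_assoc2.hyps(1) by (auto elim: acp_NilE2)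
      obtain Bq where Bq: "prs B Bq" "acp Bq P''" using ac_assoc2.IH(2) \<open>pr B' P''\<close> by blast
      have "pr (Par A (Par B C)) (Par B C)" using \<open>A = Nil\<close> by (auto intro: pr.intros)
      moreover have "pr (Par B C) B" using \<open>C = Nil\<close> by (auto intro: pr.intros)
      ultimately show ?thesis using Bq by (meson prs_step)
    qed
  next
    assume "Par A' B' = Nil" then show ?thesis by simp
  qed
next
  case (ac_comm A A' B B')
  from pr_Par_cases[OF ac_comm.prems] show ?case
  proof (elim disjE exE conjE)
    fix B'' A'' assume "P'' = Par B'' A''" "pr B' B''" "pr A' A''"
    then show ?thesis using ac_comm.IH by (meson acp.ac_comm prs_Par)
  next
    assume "A' = Nil" "pr B' P''"
    then have "A = Nil" using ac_comm.hyps(1) by (auto elim: acp_NilE2)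
    obtain Bq where Bq: "prs B Bq" "acp Bq P''" using ac_comm.IH(2) \<open>pr B' P''\<close> by blast
    have "pr (Par A B) B" using \<open>A = Nil\<close> by (auto intro: pr.intros)
    then show ?thesis using Bq by (meson prs_step)
  next
    assume "B' = Nil" "pr A' P''"
    then have "B = Nil" using ac_comm.hyps(2) by (auto elim: acp_NilE2)
    obtain Aq where Aq: "prs A Aq" "acp Aq P''" using ac_comm.IH(1) \<open>pr A' P''\<close> by blast
    have "pr (Par A B) A" using \<open>B = Nil\<close> by (auto intro: pr.intros)
    then show ?thesis using Aq by (meson prs_step)
  qed
qed



lemma dep_Suc_intros:
  "dep (PV i) (Suc 0)"
  "dep P k \<Longrightarrow> dep (Inp m P) (Suc k)"
  "dep P k \<Longrightarrow> dep (Out m P) (Suc k)"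
  "dep P k \<Longrightarrow> dep (PAbs P) (Suc k)"
  "dep P k \<Longrightarrow> dep (NAbs P) (Suc k)"
  "dep P k \<Longrightarrow> dep (PApp (PV i) P) (Suc k)"
  "dep (NApp (PV i) n) (Suc 0)"
  using dep.intros by auto

abbreviation acs where "acs \<equiv> acp\<^sup>*\<^sup>*"

lemma comm_prs: "prs P' P'' \<Longrightarrow> acp P P' \<Longrightarrow> \<exists>Q. prs P Q \<and> acp Q P''"
proof (induction arbitrary: P rule: rtranclp_induct)
  case base then show ?case by blast
next
  case (step y z)
  then obtain Q where "prs P Q" "acp Q y" by blast
  with comm1[OF this(2) step.hyps(2)] show ?case by (meson rtranclp_trans)
qed

lemma comm_acs: "acs P P' \<Longrightarrow> prs P' P'' \<Longrightarrow> \<exists>Q. prs P Q \<and> acs Q P''"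
proof (induction arbitrary: P'' rule: rtranclp_induct)
  case base then show ?case by blast
next
  case (step y z)
  from comm_prs[OF step.prems step.hyps(2)] obtain Q1 where "prs y Q1" "acp Q1 P''" by blast
  with step.IH obtain Q where "prs P Q" "acs Q Q1" by blast
  then show ?case using \<open>acp Q1 P''\<close> by (meson rtranclp.rtrancl_into_rtrancl)
qed

lemma acs_sym: "acs P Q \<Longrightarrow> acs Q P"
  by (induction rule: rtranclp_induct) (auto intro: acp_sym converse_rtranclp_into_rtranclp)

definition J :: "trm \<Rightarrow> trm \<Rightarrow> bool" where
  "J P Q \<longleftrightarrow> (\<exists>P' Q'. prs P P' \<and> prs Q Q' \<and> acs P' Q')"

lemma J_refl: "J P P" unfolding J_def by blast
lemma J_sym: "J P Q \<Longrightarrow> J Q P" unfolding J_def using acs_sym by blast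
lemma J_trans: "J P Q \<Longrightarrow> J Q R \<Longrightarrow> J P R"
proof -
  assume "J P Q" "J Q R"
  then obtain P1 Q1 Q2 R2 where a: "prs P P1" "prs Q Q1" "acs P1 Q1" "prs Q Q2" "prs R R2" "acs Q2 R2"
    unfolding J_def by blast
  obtain S where S: "prs Q1 S" "prs Q2 S" using prs_confl a by blast
  obtain P3 where P3: "prs P1 P3" "acs P3 S" using comm_acs[OF a(3) S(1)] by blast
  obtain R3 where R3: "prs R2 R3" "acs R3 S" using comm_acs[OF acs_sym[OF a(6)] S(2)] by blast
  have "acs P3 R3" using P3(2) acs_sym[OF R3(2)] by simp
  then show "J P R" unfolding J_def using a P3 R3 by (meson rtranclp_trans)
qed

lemma acs_lift1: "acs A A' \<Longrightarrow> (\<And>x y. acp x y \<Longrightarrow> acp (f x) (f y)) \<Longrightarrow> acs (f A) (f A')"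
  by (induction rule: rtranclp_induct) (auto intro: rtranclp.rtrancl_into_rtrancl)

lemma J_lift1:
  assumes "J A A'" "\<And>x y. acp x y \<Longrightarrow> acp (f x) (f y)" "\<And>x y. pr x y \<Longrightarrow> pr (f x) (f y)"
  shows "J (f A) (f A')"
  using assms unfolding J_def by (meson acs_lift1 prs_lift1)

lemma J_lift2:
  assumes "J A A'" "J B B'" "\<And>x y u v. acp x y \<Longrightarrow> acp u v \<Longrightarrow> acp (f x u) (f y v)"
    "\<And>x y u v. pr x y \<Longrightarrow> pr u v \<Longrightarrow> pr (f x u) (f y v)"
  shows "J (f A B) (f A' B')"
proof -
  have "J (f A B) (f A' B)" using assms(1) by (rule J_lift1) (auto intro: assms(3,4))
  moreover have "J (f A' B) (f A' B')" using assms(2) by (rule J_lift1) (auto intro: assms(3,4))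
  ultimately show ?thesis by (rule J_trans)
qed

lemma J_pr: "pr P Q \<Longrightarrow> J P Q" unfolding J_def by blast
lemma J_acp: "acp P Q \<Longrightarrow> J P Q" unfolding J_def by blast

lemma scong_J: "P \<equiv>s Q \<Longrightarrow> J P Q"
proof (induction rule: scong.induct)
  case (sc_refl P) then show ?case by (rule J_refl)
next
  case (sc_sym P Q) then show ?case using J_sym by blast
next
  case (sc_trans P Q R) then show ?case using J_trans by blast
next
  case (sc_inp P P' m) show ?case by (rule J_lift1[OF sc_inp.IH]) (auto intro: acp.intros pr.intros)
next
  case (sc_out P P' m) show ?case by (rule J_lift1[OF sc_out.IH]) (auto intro: acp.intros pr.intros)
next
  case (sc_par P P' Q Q') show ?case by (rule J_lift2[OF sc_par.IH]) (auto intro: acp.intros pr.intros)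
next
  case (sc_pabs P P') show ?case by (rule J_lift1[OF sc_pabs.IH]) (auto intro: acp.intros pr.intros)
next
  case (sc_papp P P' Q Q') show ?case by (rule J_lift2[OF sc_papp.IH]) (auto intro: acp.intros pr.intros)
next
  case (sc_nabs P P') show ?case by (rule J_lift1[OF sc_nabs.IH]) (auto intro: acp.intros pr.intros)
next
  case (sc_napp P P' n) show ?case by (rule J_lift1[OF sc_napp.IH]) (auto intro: acp.intros pr.intros)
next
  case (sc_assoc P Q R) then show ?case by (rule J_acp, rule ac_assoc) auto
next
  case (sc_comm P Q) then show ?case by (rule J_acp, rule ac_comm) auto
next
  case (sc_nil P) then show ?case by (auto intro!: J_pr pr.intros)
next
  case (sc_betaP P Q) then show ?case by (auto intro!: J_pr pr.intros)
next
  case (sc_betaN P n) then show ?case by (auto intro!: J_pr pr.intros)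
qed

lemma dep_pr: "dep P k \<Longrightarrow> pr P P' \<Longrightarrow> dep P' k"
proof (induction arbitrary: P' rule: dep.induct)
  case d_nil then show ?case by (auto elim: pr_NilE intro: dep.intros dep_Suc_intros)
next
  case (d_var i) then show ?case using dep.d_var[of i] by (auto elim: pr_PVE)
next
  case (d_inp P k m) then show ?case by (auto elim!: pr_InpE intro: dep.intros dep_Suc_intros)
next
  case (d_out P k m) then show ?case by (auto elim!: pr_OutE intro: dep.intros dep_Suc_intros)
next
  case (d_pabs P k) then show ?case by (auto elim!: pr_PAbsE intro: dep.intros dep_Suc_intros)
next
  case (d_nabs P k) then show ?case by (auto elim!: pr_NAbsE intro: dep.intros dep_Suc_intros)
next
  case (d_par P1 k1 P2 k2)
  from pr_Par_cases[OF d_par.prems] show ?case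
  proof (elim disjE exE conjE)
    fix A B assume "P' = Par A B" "pr P1 A" "pr P2 B"
    then show ?thesis using d_par.IH by (auto intro: dep.intros dep_Suc_intros)
  next
    assume "P2 = Nil" "pr P1 P'"
    then have "k2 = 0" using d_par.hyps(2) by (auto elim: dep_Nil)
    then show ?thesis using d_par.IH(1) \<open>pr P1 P'\<close> by simp
  next
    assume "P1 = Nil" "pr P2 P'"
    then have "k1 = 0" using d_par.hyps(1) by (auto elim: dep_Nil)
    then show ?thesis using d_par.IH(2) \<open>pr P2 P'\<close> by simp
  qed
next
  case (d_vapp P k i)
  from pr_PApp_cases[OF d_vapp.prems] show ?case
  proof (elim disjE exE conjE)
    fix X Y assume "P' = PApp X Y" "pr (PV i) X" "pr P Y"
    moreover then have "X = PV i" by (auto elim: pr_PVE)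
    ultimately show ?thesis using d_vapp.IH dep_Suc_intros(6) by simp
  qed simp
next
  case (d_betaP P2 P3 k)
  from pr_PApp_cases[OF d_betaP.prems] show ?case
  proof (elim disjE exE conjE)
    fix X Y assume "P' = PApp X Y" "pr (PAbs P3) X" "pr P2 Y"
    then obtain P3' where "X = PAbs P3'" "pr P3 P3'" by (auto elim: pr_PAbsE)
    then have "pr (substP 0 P2 P3) (substP 0 Y P3')" using \<open>pr P2 Y\<close> by (simp add: pr_substP)
    then show ?thesis using d_betaP.IH \<open>P' = _\<close> \<open>X = _\<close> by (auto intro: dep.intros dep_Suc_intros)
  next
    fix Z Z'' Y'' assume "PAbs P3 = PAbs Z" "P' = substP 0 Y'' Z''" "pr Z Z''" "pr P2 Y''"
    then show ?thesis using d_betaP.IH by (simp add: pr_substP)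
  qed
next
  case (d_vnapp i n)
  from pr_NApp_cases[OF d_vnapp.prems] show ?case
    by (auto elim: pr_PVE intro: dep.intros dep_Suc_intros)
next
  case (d_betaN n P3 k)
  from pr_NApp_cases[OF d_betaN.prems] show ?case
  proof (elim disjE exE conjE)
    fix X assume "P' = NApp X n" "pr (NAbs P3) X"
    then obtain P3' where "X = NAbs P3'" "pr P3 P3'" by (auto elim: pr_NAbsE)
    then have "pr (substN 0 n P3) (substN 0 n P3')" by (simp add: pr_substN)
    then show ?thesis using d_betaN.IH \<open>P' = _\<close> \<open>X = _\<close> by (auto intro: dep.intros dep_Suc_intros)
  next
    fix Z Z'' assume "NAbs P3 = NAbs Z" "P' = substN 0 n Z''" "pr Z Z''"
    then show ?thesis using d_betaN.IH by (simp add: pr_substN)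
  qed
qed

lemma dep_prs: "prs P P' \<Longrightarrow> dep P k \<Longrightarrow> dep P' k"
  by (induction rule: rtranclp_induct) (auto intro: dep_pr)

lemma acp_Par_cases: "acp (Par P1 P2) P' \<Longrightarrow>
  (\<exists>A B. P' = Par A B \<and> acp P1 A \<and> acp P2 B) \<or>
  (\<exists>A A' B B' C'. P1 = Par A B \<and> P' = Par A' (Par B' C') \<and> acp A A' \<and> acp B B' \<and> acp P2 C') \<or>
  (\<exists>A' B C B' C'. P2 = Par B C \<and> P' = Par (Par A' B') C' \<and> acp P1 A' \<and> acp B B' \<and> acp C C') \<or>
  (\<exists>A' B'. P' = Par B' A' \<and> acp P1 A' \<and> acp P2 B')"
  by (erule acp_ParE) blast+

lemma dep_acp: "dep P k \<Longrightarrow> acp P P' \<Longrightarrow> dep P' k"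
proof (induction arbitrary: P' rule: dep.induct)
  case d_nil then show ?case by (auto elim: acp_NilE intro: dep.intros dep_Suc_intros)
next
  case (d_var i) then show ?case using dep.d_var[of i] by (auto elim: acp_PVE)
next
  case (d_inp P k m) then show ?case by (auto elim!: acp_InpE intro: dep.intros dep_Suc_intros)
next
  case (d_out P k m) then show ?case by (auto elim!: acp_OutE intro: dep.intros dep_Suc_intros)
next
  case (d_pabs P k) then show ?case by (auto elim!: acp_PAbsE intro: dep.intros dep_Suc_intros)
next
  case (d_nabs P k) then show ?case by (auto elim!: acp_NAbsE intro: dep.intros dep_Suc_intros)
next
  case (d_par P1 k1 P2 k2)
  from acp_Par_cases[OF d_par.prems] show ?case
  proof (elim disjE exE conjE)
    fix A B assume "P' = Par A B" "acp P1 A" "acp P2 B"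
    then show ?thesis using d_par.IH by (auto intro: dep.intros)
  next
    fix A A' B B' C' assume 2: "P1 = Par A B" "P' = Par A' (Par B' C')" "acp A A'" "acp B B'" "acp P2 C'"
    have "dep (Par A' B') k1" using d_par.IH(1) 2 by (auto intro: acp.intros)
    then obtain ka kb where "dep A' ka" "dep B' kb" "k1 = ka + kb" by (auto elim: dep_Par)
    moreover have "dep C' k2" using d_par.IH(2) 2 by auto
    ultimately have "dep (Par A' (Par B' C')) (ka + (kb + k2))" by (auto intro: dep.intros dep_Suc_intros)
    then show ?thesis using 2 \<open>k1 = _\<close> by (simp add: add.assoc)
  next
    fix A' B C B' C' assume 3: "P2 = Par B C" "P' = Par (Par A' B') C'" "acp P1 A'" "acp B B'" "acp C C'"
    have "dep (Par B' C') k2" using d_par.IH(2) 3 by (auto intro: acp.intros)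
    then obtain kb kc where "dep B' kb" "dep C' kc" "k2 = kb + kc" by (auto elim: dep_Par)
    moreover have "dep A' k1" using d_par.IH(1) 3 by auto
    ultimately have "dep (Par (Par A' B') C') ((k1 + kb) + kc)" by (auto intro: dep.intros dep_Suc_intros)
    then show ?thesis using 3 \<open>k2 = _\<close> by (simp add: add.assoc)
  next
    fix A' B' assume 4: "P' = Par B' A'" "acp P1 A'" "acp P2 B'"
    then have "dep (Par B' A') (k2 + k1)" using d_par.IH by (auto intro: dep.intros dep_Suc_intros)
    then show ?thesis using 4 by (simp add: add.commute)
  qed
next
  case (d_vapp P k i)
  then show ?case by (auto elim!: acp_PAppE acp_PVE intro: dep.intros dep_Suc_intros)
next
  case (d_betaP P2 P3 k)
  from d_betaP.prems obtain P3' Y where "P' = PApp (PAbs P3') Y" "acp P3 P3'" "acp P2 Y"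
    by (auto elim!: acp_PAppE acp_PAbsE)
  moreover then have "acp (substP 0 P2 P3) (substP 0 Y P3')" by (simp add: acp_substP)
  ultimately show ?case using d_betaP.IH by (auto intro: dep.intros dep_Suc_intros)
next
  case (d_vnapp i n)
  then show ?case by (auto elim!: acp_NAppE acp_PVE intro: dep.intros dep_Suc_intros)
next
  case (d_betaN n P3 k)
  from d_betaN.prems obtain P3' where "P' = NApp (NAbs P3') n" "acp P3 P3'"
    by (auto elim!: acp_NAppE acp_NAbsE)
  moreover then have "acp (substN 0 n P3) (substN 0 n P3')" by (simp add: acp_substN)
  ultimately show ?case using d_betaN.IH by (auto intro: dep.intros dep_Suc_intros)
qed

lemma dep_acs: "acs P P' \<Longrightarrow> dep P k \<Longrightarrow> dep P' k"
  by (induction rule: rtranclp_induct) (auto intro: dep_acp)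

definition Dv :: "trm \<Rightarrow> nat \<Rightarrow> bool" where
  "Dv M k \<longleftrightarrow> (\<exists>M'. prs M M' \<and> dep M' k)"

lemma Dv_dep: "dep M k \<Longrightarrow> Dv M k" unfolding Dv_def by blast

lemma Dv_fun: "Dv M k \<Longrightarrow> Dv M k' \<Longrightarrow> k = k'"
  unfolding Dv_def by (meson dep_fun dep_prs prs_confl)

lemma Dv_J: "J M N \<Longrightarrow> Dv M k \<Longrightarrow> Dv N k"
proof -
  assume "J M N" "Dv M k"
  then obtain M1 M2 N2 where a: "prs M M1" "dep M1 k" "prs M M2" "prs N N2" "acs M2 N2"
    unfolding J_def Dv_def by blast
  obtain S where S: "prs M1 S" "prs M2 S" using prs_confl a by blast
  have "dep S k" using S(1) a(2) by (rule dep_prs)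
  obtain N3 where "prs N2 N3" "acs N3 S" using comm_acs[OF acs_sym[OF a(5)] S(2)] by blast
  then have "dep N3 k" using \<open>dep S k\<close> acs_sym dep_acs by blast
  then show "Dv N k" unfolding Dv_def using a(4) \<open>prs N2 N3\<close> by (meson rtranclp_trans)
qed

lemma Dv_scong: "P \<equiv>s Q \<Longrightarrow> Dv P k \<Longrightarrow> Dv Q k"
  using Dv_J scong_J by blast



lemma Dv_prepend: "prs X X' \<Longrightarrow> Dv X' a \<Longrightarrow> Dv X a"
  unfolding Dv_def by (meson rtranclp_trans)

lemma Dv_Nil: "Dv Nil k \<longleftrightarrow> k = 0"
  unfolding Dv_def by (auto dest: prs_NilE elim: dep_Nil intro: dep.intros)

lemma Dv_PV: "Dv (PV i) k \<longleftrightarrow> k = 1"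
  unfolding Dv_def using dep_Suc_intros(1) by (auto dest: prs_PVE elim: dep_PV)

lemma Dv_VNApp: "Dv (NApp (PV i) x) k \<longleftrightarrow> k = 1"
  unfolding Dv_def using dep_Suc_intros(7) by (auto dest: prs_VNAppE elim: dep_NApp)

lemma Dv_Inp: "Dv (Inp m A) k \<longleftrightarrow> (\<exists>a. Dv A a \<and> k = Suc a)"
  unfolding Dv_def by (auto dest!: prs_InpE elim!: dep_Inp intro: prs_Inp dep_Suc_intros)
lemma Dv_Out: "Dv (Out m A) k \<longleftrightarrow> (\<exists>a. Dv A a \<and> k = Suc a)"
  unfolding Dv_def by (auto dest!: prs_OutE elim!: dep_Out intro: prs_Out dep_Suc_intros)
lemma Dv_PAbs: "Dv (PAbs A) k \<longleftrightarrow> (\<exists>a. Dv A a \<and> k = Suc a)"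
  unfolding Dv_def by (auto dest!: prs_PAbsE elim!: dep_PAbs intro: prs_PAbs dep_Suc_intros)
lemma Dv_NAbs: "Dv (NAbs A) k \<longleftrightarrow> (\<exists>a. Dv A a \<and> k = Suc a)"
  unfolding Dv_def by (auto dest!: prs_NAbsE elim!: dep_NAbs intro: prs_NAbs dep_Suc_intros)
lemma Dv_VApp: "Dv (PApp (PV i) A) k \<longleftrightarrow> (\<exists>a. Dv A a \<and> k = Suc a)"
proof
  assume "Dv (PApp (PV i) A) k"
  then obtain M where "prs (PApp (PV i) A) M" "dep M k" unfolding Dv_def by blast
  then obtain A' where "M = PApp (PV i) A'" "prs A A'" by (auto dest: prs_VAppE)
  with \<open>dep M k\<close> show "\<exists>a. Dv A a \<and> k = Suc a" unfolding Dv_def by (auto elim!: dep_PApp)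
next
  assume "\<exists>a. Dv A a \<and> k = Suc a"
  then obtain a A' where "prs A A'" "dep A' a" "k = Suc a" unfolding Dv_def by blast
  then have "prs (PApp (PV i) A) (PApp (PV i) A')" "dep (PApp (PV i) A') k"
    by (auto intro: prs_PApp dep_Suc_intros)
  then show "Dv (PApp (PV i) A) k" unfolding Dv_def by blast
qed

lemma prs_Par_dep: "prs P M \<Longrightarrow> P = Par X Y \<Longrightarrow> dep M k \<Longrightarrow> \<exists>a b. Dv X a \<and> Dv Y b \<and> k = a + b"
proof (induction arbitrary: X Y rule: converse_rtranclp_induct)
  case base
  then show ?case using Dv_dep by (auto elim!: dep_Par)
next
  case (step P Z)
  from pr_Par_cases[OF step.hyps(1)[unfolded step.prems(1)]] show ?case
  proof (elim disjE exE conjE)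
    fix X' Y' assume "Z = Par X' Y'" "pr X X'" "pr Y Y'"
    then show ?thesis using step.IH step.prems(2) Dv_prepend by blast
  next
    assume "Y = Nil" "pr X Z"
    then have "Dv X k" using step.hyps(2) step.prems(2) unfolding Dv_def
      by (meson converse_rtranclp_into_rtranclp)
    then show ?thesis using \<open>Y = Nil\<close> Dv_Nil by auto
  next
    assume "X = Nil" "pr Y Z"
    then have "Dv Y k" using step.hyps(2) step.prems(2) unfolding Dv_def
      by (meson converse_rtranclp_into_rtranclp)
    then show ?thesis using \<open>X = Nil\<close> Dv_Nil by auto
  qed
qed

lemma Dv_Par: "Dv (Par X Y) k \<longleftrightarrow> (\<exists>a b. Dv X a \<and> Dv Y b \<and> k = a + b)"
proof
  assume "Dv (Par X Y) k"
  then show "\<exists>a b. Dv X a \<and> Dv Y b \<and> k = a + b" unfolding Dv_def[of "Par X Y"]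
    using prs_Par_dep by blast
next
  assume "\<exists>a b. Dv X a \<and> Dv Y b \<and> k = a + b"
  then show "Dv (Par X Y) k" unfolding Dv_def by (auto intro: prs_Par d_par)
qed

lemma dep_liftP: "dep X a \<Longrightarrow> dep (liftP k X) a"
proof (induction arbitrary: k rule: dep.induct)
  case (d_betaP P2 P3 j)
  then show ?case by (simp add: liftP_substP2[of 0 k, simplified, symmetric] dep.d_betaP)
next
  case (d_betaN n P3 j)
  then show ?case by (simp add: liftP_substN dep.d_betaN)
next
  case (d_vapp P j i)
  then show ?case by (simp add: dep_Suc_intros(6))
next
  case (d_vnapp i n)
  then show ?case using dep.d_vnapp by simp
qed (auto intro: dep.intros dep_Suc_intros)

lemma Dv_liftP: "Dv X a \<Longrightarrow> Dv (liftP k X) a"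
  unfolding Dv_def by (meson dep_liftP prs_liftP)

lemma Dv_trans:
  "trans P l P' \<Longrightarrow> Dv P k \<Longrightarrow>
    (\<forall>m. l = LIn m \<longrightarrow> (\<exists>k'. k = Suc k' \<and> Dv P' k')) \<and>
    (\<forall>m B. l = LOut m B \<longrightarrow> (\<exists>b q. Dv B b \<and> Dv P' q \<and> k = Suc (b + q)))"
proof (induction arbitrary: k rule: trans.induct)
  case (tr_inp m P) then show ?case by (auto simp: Dv_Inp)
next
  case (tr_out m Q) then show ?case by (auto simp: Dv_Out Dv_Nil)
next
  case (tr_parl_in P m P' Q)
  then obtain a b where "Dv P a" "Dv Q b" "k = a + b" by (auto simp: Dv_Par)
  with tr_parl_in.IH obtain a' where "a = Suc a'" "Dv P' a'" by blast
  then show ?case using \<open>Dv Q b\<close> \<open>k = _\<close> Dv_liftP by (auto simp: Dv_Par)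
next
  case (tr_parr_in Q m Q' P)
  then obtain a b where "Dv P a" "Dv Q b" "k = a + b" by (auto simp: Dv_Par)
  with tr_parr_in.IH obtain b' where "b = Suc b'" "Dv Q' b'" by blast
  then show ?case using \<open>Dv P a\<close> \<open>k = _\<close> Dv_liftP by (auto simp: Dv_Par)
next
  case (tr_parl_out P m A P' Q)
  then obtain a b where "Dv P a" "Dv Q b" "k = a + b" by (auto simp: Dv_Par)
  with tr_parl_out.IH obtain b0 q0 where "Dv A b0" "Dv P' q0" "a = Suc (b0 + q0)" by blast
  moreover have "Dv (Par P' Q) (q0 + b)" using \<open>Dv P' q0\<close> \<open>Dv Q b\<close> Dv_Par by blast
  ultimately show ?case using \<open>k = _\<close> by auto
next
  case (tr_parr_out Q m A Q' P)
  then obtain a b where "Dv P a" "Dv Q b" "k = a + b" by (auto simp: Dv_Par)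
  with tr_parr_out.IH obtain b0 q0 where "Dv A b0" "Dv Q' q0" "b = Suc (b0 + q0)" by blast
  moreover have "Dv (Par P Q') (a + q0)" using \<open>Dv Q' q0\<close> \<open>Dv P a\<close> Dv_Par by blast
  ultimately show ?case using \<open>k = _\<close> by auto
next
  case (tr_cong P P1 l P1' P')
  then have "Dv P1 k" using Dv_scong by blast
  with tr_cong.IH have IH: "(\<forall>m. l = LIn m \<longrightarrow> (\<exists>k'. k = Suc k' \<and> Dv P1' k')) \<and>
    (\<forall>m B. l = LOut m B \<longrightarrow> (\<exists>b q. Dv B b \<and> Dv P1' q \<and> k = Suc (b + q)))" by blast
  have sc: "\<And>j. Dv P1' j \<Longrightarrow> Dv P' j" using Dv_scong tr_cong.hyps(3) by blast
  show ?case
  proof (intro conjI allI impI)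
    fix m assume "l = LIn m"
    then obtain k' where "k = Suc k'" "Dv P1' k'" using IH by blast
    then show "\<exists>k'. k = Suc k' \<and> Dv P' k'" using sc by blast
  next
    fix m B assume "l = LOut m B"
    then obtain b q where "Dv B b" "Dv P1' q" "k = Suc (b + q)" using IH by blast
    then show "\<exists>b q. Dv B b \<and> Dv P' q \<and> k = Suc (b + q)" using sc by blast
  qed
qed auto

definition iscomp :: "(nat \<Rightarrow> ty) \<Rightarrow> trm \<Rightarrow> nat \<Rightarrow> bool" where
  "iscomp G C c \<longleftrightarrow>
     (\<exists>m A a s. C = Inp m A \<and> typed (ext_ctx s G) A Pr \<and> dep A a \<and> c = Suc a) \<or>
     (\<exists>m A a s. C = Out m A \<and> typed G A s \<and> dep A a \<and> c = Suc a) \<or>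
     (\<exists>i. C = PV i \<and> c = 1) \<or>
     (\<exists>i A a s. C = PApp (PV i) A \<and> typed G A s \<and> dep A a \<and> c = Suc a) \<or>
     (\<exists>i x. C = NApp (PV i) x \<and> c = 1)"

lemma sc_unit: "C \<equiv>s Par C Nil"
  by (rule sc_sym, rule sc_nil)

lemma comp_self: "iscomp G C c \<Longrightarrow> \<exists>C' c' Rs r. iscomp G C' c' \<and> C \<equiv>s Par C' Rs \<and> typed G Rs Pr \<and> dep Rs r \<and> c = c' + r"
  apply (rule exI[of _ C], rule exI[of _ c], rule exI[of _ Nil], rule exI[of _ 0])
  by (simp add: sc_unit t_nil d_nil)

definition DC :: "(nat \<Rightarrow> ty) \<Rightarrow> trm \<Rightarrow> nat \<Rightarrow> bool" where
  "DC G P n \<longleftrightarrow> (n = 0 \<and> P \<equiv>s Nil) \<or> (\<exists>C c Rs r. iscomp G C c \<and> P \<equiv>s Par C Rs \<and> typed G Rs Pr \<and> dep Rs r \<and> n = c + r)"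

lemma DC_transfer: "P \<equiv>s P' \<Longrightarrow> DC G P' n \<Longrightarrow> DC G P n"
  unfolding DC_def
proof (elim disjE exE conjE)
  assume "P \<equiv>s P'" "n = 0" "P' \<equiv>s Nil"
  then show "(n = 0 \<and> P \<equiv>s Nil) \<or> (\<exists>C c Rs r. iscomp G C c \<and> P \<equiv>s Par C Rs \<and> typed G Rs Pr \<and> dep Rs r \<and> n = c + r)"
    using sc_trans[of P P' Nil] by blast
next
  fix C c Rs r assume "P \<equiv>s P'" "iscomp G C c" "P' \<equiv>s Par C Rs" "typed G Rs Pr" "dep Rs r" "n = c + r"
  moreover then have "P \<equiv>s Par C Rs" using sc_trans[of P P' "Par C Rs"] by blast
  ultimately show "(n = 0 \<and> P \<equiv>s Nil) \<or> (\<exists>C c Rs r. iscomp G C c \<and> P \<equiv>s Par C Rs \<and> typed G Rs Pr \<and> dep Rs r \<and> n = c + r)"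
    by blast
qed

lemma decomp:
  "dep P n \<Longrightarrow> typed G P Pr \<Longrightarrow>
    (n = 0 \<and> P \<equiv>s Nil) \<or> (\<exists>C c Rs r. iscomp G C c \<and> P \<equiv>s Par C Rs \<and> typed G Rs Pr \<and> dep Rs r \<and> n = c + r)"
proof (induction arbitrary: G rule: dep.induct)
  case d_nil then show ?case by (auto intro: sc_refl)
next
  case (d_var i)
  have "iscomp G (PV i) 1" unfolding iscomp_def by blast
  then show ?case using comp_self by auto
next
  case (d_inp P k m)
  then obtain s where "typed (ext_ctx s G) P Pr" by (auto elim: typ_Inp)
  then have "iscomp G (Inp m P) (Suc k)" using d_inp.hyps unfolding iscomp_def by blast
  then show ?case using comp_self by auto
next
  case (d_out P k m)
  then obtain s where "typed G P s" by (auto elim: typ_Out)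
  then have "iscomp G (Out m P) (Suc k)" using d_out.hyps unfolding iscomp_def by blast
  then show ?case using comp_self by auto
next
  case (d_vapp P k i)
  then obtain s where "typed G P s" by (auto elim: typ_PApp)
  then have "iscomp G (PApp (PV i) P) (Suc k)" using d_vapp.hyps unfolding iscomp_def by blast
  then show ?case using comp_self by auto
next
  case (d_vnapp i x)
  have "iscomp G (NApp (PV i) x) 1" unfolding iscomp_def by blast
  then show ?case using comp_self by auto
next
  case (d_pabs P k) then show ?case by (auto elim: typ_PAbs)
next
  case (d_nabs P k) then show ?case by (auto elim: typ_NAbs)
next
  case (d_betaP P2 P3 k)
  have "typed G (substP 0 P2 P3) Pr" using d_betaP.prems by (rule typed_betaP)
  from d_betaP.IH[OF this] show ?case using DC_transfer[OF sc_betaP[of P3 P2]] unfolding DC_def by blast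
next
  case (d_betaN n P3 k)
  have "typed G (substN 0 n P3) Pr" using d_betaN.prems by (rule typed_betaN)
  from d_betaN.IH[OF this] show ?case using DC_transfer[OF sc_betaN[of P3 n]] unfolding DC_def by blast
next
  case (d_par P1 k1 P2 k2)
  from d_par.prems have t1: "typed G P1 Pr" and t2: "typed G P2 Pr" by (auto elim: typ_Par)
  from d_par.IH(1)[OF t1] show ?case
  proof (elim disjE exE conjE)
    assume "k1 = 0" "P1 \<equiv>s Nil"
    then have e: "Par P1 P2 \<equiv>s P2"
      by (meson sc_comm sc_nil sc_par sc_refl sc_trans)
    from d_par.IH(2)[OF t2] show ?thesis
    proof (elim disjE exE conjE)
      assume "k2 = 0" "P2 \<equiv>s Nil"
      then have "Par P1 P2 \<equiv>s Nil" using e sc_trans[of "Par P1 P2" P2 Nil] by blast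
      then show ?thesis using \<open>k1 = 0\<close> \<open>k2 = 0\<close> by simp
    next
      fix C c Rs r assume h: "iscomp G C c" "P2 \<equiv>s Par C Rs" "typed G Rs Pr" "dep Rs r" "k2 = c + r"
      then have "Par P1 P2 \<equiv>s Par C Rs" using e sc_trans[of "Par P1 P2" P2] by blast
      then show ?thesis using h \<open>k1 = 0\<close> by auto
    qed
  next
    fix C c Rs r assume h: "iscomp G C c" "P1 \<equiv>s Par C Rs" "typed G Rs Pr" "dep Rs r" "k1 = c + r"
    have "Par P1 P2 \<equiv>s Par (Par C Rs) P2" using h(2) by (simp add: sc_par sc_refl)
    then have "Par P1 P2 \<equiv>s Par C (Par Rs P2)" using sc_assoc[of C Rs P2] sc_trans by blast
    moreover have "typed G (Par Rs P2) Pr" using h(3) t2 by (rule t_par)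
    moreover have "dep (Par Rs P2) (r + k2)" using h(4) d_par.hyps(2) by (rule dep.d_par)
    moreover have "k1 + k2 = c + (r + k2)" using h by simp
    ultimately show ?thesis using h(1) by blast
  qed
qed




lemma hb_unf: "hoio_bisim R \<Longrightarrow> R P Q \<Longrightarrow>
        (\<not> is_abstraction P \<longrightarrow> \<not> is_abstraction Q) \<and>
        (\<forall>A. P = PAbs A \<longrightarrow> (\<exists>B. Q = PAbs B \<and> R A B)) \<and>
        (\<forall>A. P = NAbs A \<longrightarrow> (\<exists>B. Q = NAbs B \<and> R A B)) \<and>
        (\<forall>m A P'. trans P (LOut m A) P' \<longrightarrow>
            (\<exists>B Q'. trans Q (LOut m B) Q' \<and> R A B \<and> R P' Q')) \<and>
        (\<forall>m P'. trans P (LIn m) P' \<longrightarrow> (\<exists>Q'. trans Q (LIn m) Q' \<and> R P' Q')) \<and>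
        (\<forall>i P'. P \<equiv>s Par (PV i) P' \<longrightarrow> (\<exists>Q'. Q \<equiv>s Par (PV i) Q' \<and> R P' Q')) \<and>
        (\<forall>i A P'. P \<equiv>s Par (PApp (PV i) A) P' \<longrightarrow>
            (\<exists>B Q'. Q \<equiv>s Par (PApp (PV i) B) Q' \<and> R A B \<and> R P' Q')) \<and>
        (\<forall>i n P'. P \<equiv>s Par (NApp (PV i) n) P' \<longrightarrow>
            (\<exists>Q'. Q \<equiv>s Par (NApp (PV i) n) Q' \<and> R P' Q'))"
  unfolding hoio_bisim_def by (drule conjunct2, drule spec, drule spec, erule mp)
lemma hb_sym: "hoio_bisim R \<Longrightarrow> R P Q \<Longrightarrow> R Q P"
  unfolding hoio_bisim_def by (drule conjunct1, drule spec, drule spec, erule mp)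
lemma hb_pabs: "hoio_bisim R \<Longrightarrow> R (PAbs A) Q \<Longrightarrow> \<exists>B. Q = PAbs B \<and> R A B"
  by (drule (1) hb_unf) simp
lemma hb_nabs: "hoio_bisim R \<Longrightarrow> R (NAbs A) Q \<Longrightarrow> \<exists>B. Q = NAbs B \<and> R A B"
  by (drule (1) hb_unf) simp
lemma hb_out: "hoio_bisim R \<Longrightarrow> R P Q \<Longrightarrow> trans P (LOut m A) P' \<Longrightarrow>
    \<exists>B Q'. trans Q (LOut m B) Q' \<and> R A B \<and> R P' Q'"
  by (drule (1) hb_unf) (elim conjE, blast)
lemma hb_in: "hoio_bisim R \<Longrightarrow> R P Q \<Longrightarrow> trans P (LIn m) P' \<Longrightarrow>
    \<exists>Q'. trans Q (LIn m) Q' \<and> R P' Q'"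
  by (drule (1) hb_unf) (elim conjE, blast)
lemma hb_var: "hoio_bisim R \<Longrightarrow> R P Q \<Longrightarrow> P \<equiv>s Par (PV i) P' \<Longrightarrow>
    \<exists>Q'. Q \<equiv>s Par (PV i) Q' \<and> R P' Q'"
  by (drule (1) hb_unf) (elim conjE, blast)
lemma hb_vapp: "hoio_bisim R \<Longrightarrow> R P Q \<Longrightarrow> P \<equiv>s Par (PApp (PV i) A) P' \<Longrightarrow>
    \<exists>B Q'. Q \<equiv>s Par (PApp (PV i) B) Q' \<and> R A B \<and> R P' Q'"
  by (drule (1) hb_unf) (elim conjE, blast)
lemma hb_vnapp: "hoio_bisim R \<Longrightarrow> R P Q \<Longrightarrow> P \<equiv>s Par (NApp (PV i) x) P' \<Longrightarrow>
    \<exists>Q'. Q \<equiv>s Par (NApp (PV i) x) Q' \<and> R P' Q'"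
  by (drule (1) hb_unf) (elim conjE, blast)
lemma typed_not_Pr: "typed G P s \<Longrightarrow> s \<noteq> Pr \<Longrightarrow> (\<exists>i. P = PV i) \<or> (\<exists>A. P = PAbs A) \<or> (\<exists>A. P = NAbs A)"
  by (induction rule: typed.induct) auto

lemma bisim_le:
  assumes hb: "hoio_bisim R"
  shows "R P Q \<Longrightarrow> typed G P s \<Longrightarrow> dep P n \<Longrightarrow> Dv Q m \<Longrightarrow> n \<le> m"
proof (induction n arbitrary: P Q G s m rule: less_induct)
  case (less n P Q G s m)
  note IH = less.IH
  show ?case
  proof (cases "\<exists>A. P = PAbs A")
    case True
    then obtain A where P: "P = PAbs A" by blast
    obtain B where Q: "Q = PAbs B" "R A B" using hb_pabs[OF hb] less.prems(1) P by blast
    obtain a where "dep A a" "n = Suc a" using less.prems(3) P by (auto elim: dep_PAbs)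
    obtain b where "Dv B b" "m = Suc b" using less.prems(4) Q by (auto simp: Dv_PAbs)
    obtain s' where "typed (ext_ctx s' G) A Pr" using less.prems(2) P by (auto elim: typ_PAbs)
    then have "a \<le> b" using IH[of a A B _ Pr b] \<open>n = _\<close> \<open>dep A a\<close> \<open>Dv B b\<close> Q by blast
    then show ?thesis using \<open>n = _\<close> \<open>m = _\<close> by simp
  next
    case notPAbs: False
    show ?thesis
    proof (cases "\<exists>A. P = NAbs A")
      case True
      then obtain A where P: "P = NAbs A" by blast
      obtain B where Q: "Q = NAbs B" "R A B" using hb_nabs[OF hb] less.prems(1) P by blast
      obtain a where "dep A a" "n = Suc a" using less.prems(3) P by (auto elim: dep_NAbs)
      obtain b where "Dv B b" "m = Suc b" using less.prems(4) Q by (auto simp: Dv_NAbs)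
      have "typed G A Pr" using less.prems(2) P by (auto elim: typ_NAbs)
      then have "a \<le> b" using IH[of a A B G Pr b] \<open>n = _\<close> \<open>dep A a\<close> \<open>Dv B b\<close> Q by blast
      then show ?thesis using \<open>n = _\<close> \<open>m = _\<close> by simp
    next
      case notNAbs: False
      show ?thesis
      proof (cases "\<exists>i. P = PV i")
        case True
        then obtain i where P: "P = PV i" by blast
        have "P \<equiv>s Par (PV i) Nil" using P sc_unit by simp
        then obtain Q' where "Q \<equiv>s Par (PV i) Q'" using hb_var[OF hb less.prems(1)] by blast
        then have "Dv (Par (PV i) Q') m" using Dv_scong less.prems(4) by blast
        then have "m \<ge> 1" by (auto simp: Dv_Par Dv_PV)
        moreover have "n = 1" using less.prems(3) P by (auto elim: dep_PV)
        ultimately show ?thesis by simp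
      next
        case False
        then have tP: "typed G P Pr" using less.prems(2) notPAbs notNAbs typed_not_Pr by blast
        from decomp[OF less.prems(3) tP] show ?thesis
        proof (elim disjE exE conjE)
          assume "n = 0" then show ?thesis by simp
        next
          fix C c Rs r assume C: "iscomp G C c" and eqP: "P \<equiv>s Par C Rs" and tR: "typed G Rs Pr"
            and dR: "dep Rs r" and n: "n = c + r"
          from C show ?thesis unfolding iscomp_def
          proof (elim disjE exE conjE)
            fix m0 A a s' assume CA: "C = Inp m0 A" "typed (ext_ctx s' G) A Pr" "dep A a" "c = Suc a"
            have "trans (Par (Inp m0 A) Rs) (LIn m0) (Par A (liftP 0 Rs))"
              by (intro tr_parl_in tr_inp)
            then have "trans P (LIn m0) (Par A (liftP 0 Rs))"
              using eqP CA by (meson sc_refl tr_cong)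
            then obtain Q' where "trans Q (LIn m0) Q'" "R (Par A (liftP 0 Rs)) Q'"
              using hb_in[OF hb less.prems(1)] by blast
            then obtain m' where "m = Suc m'" "Dv Q' m'" using Dv_trans less.prems(4) by blast
            have "typed (ext_ctx s' G) (Par A (liftP 0 Rs)) Pr"
              using CA(2) typed_liftP[OF tR, of 0 s'] by (auto simp: ext_ins0 intro: t_par)
            moreover have "dep (Par A (liftP 0 Rs)) (a + r)" using CA(3) dR dep_liftP by (auto intro: d_par)
            ultimately have "a + r \<le> m'"
              using IH[of "a + r"] n CA(4) \<open>R _ Q'\<close> \<open>Dv Q' m'\<close> by auto
            then show ?thesis using n CA(4) \<open>m = _\<close> by simp
          next
            fix m0 A a s' assume CA: "C = Out m0 A" "typed G A s'" "dep A a" "c = Suc a"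
            have "trans (Par (Out m0 A) Rs) (LOut m0 A) (Par Nil Rs)"
              by (intro tr_parl_out tr_out)
            moreover have "Par Nil Rs \<equiv>s Rs" by (meson sc_comm sc_nil sc_trans)
            ultimately have "trans P (LOut m0 A) Rs"
              using eqP CA by (meson tr_cong)
            then obtain B Q' where "trans Q (LOut m0 B) Q'" "R A B" "R Rs Q'"
              using hb_out[OF hb less.prems(1)] by blast
            then obtain b q where "Dv B b" "Dv Q' q" "m = Suc (b + q)"
              using Dv_trans less.prems(4) by blast
            have "a \<le> b" using IH[of a A B G s' b] n CA \<open>R A B\<close> \<open>Dv B b\<close> by auto
            moreover have "r \<le> q" using IH[of r Rs Q' G Pr q] n CA \<open>R Rs Q'\<close> \<open>Dv Q' q\<close> tR dR by auto
            ultimately show ?thesis using n CA(4) \<open>m = _\<close> by simp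
          next
            fix i assume CA: "C = PV i" "c = 1"
            obtain Q' where "Q \<equiv>s Par (PV i) Q'" "R Rs Q'" using hb_var[OF hb less.prems(1)] eqP CA by blast
            then have "Dv (Par (PV i) Q') m" using Dv_scong less.prems(4) by blast
            then obtain q where "Dv Q' q" "m = 1 + q" by (auto simp: Dv_Par Dv_PV)
            have "r \<le> q" using IH[of r Rs Q' G Pr q] n CA \<open>R Rs Q'\<close> \<open>Dv Q' q\<close> tR dR by auto
            then show ?thesis using n CA \<open>m = _\<close> by simp
          next
            fix i A a s' assume CA: "C = PApp (PV i) A" "typed G A s'" "dep A a" "c = Suc a"
            obtain B Q' where "Q \<equiv>s Par (PApp (PV i) B) Q'" "R A B" "R Rs Q'"
              using hb_vapp[OF hb less.prems(1)] eqP CA by blast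
            then have "Dv (Par (PApp (PV i) B) Q') m" using Dv_scong less.prems(4) by blast
            then obtain b q where "Dv B b" "Dv Q' q" "m = Suc b + q" by (auto simp: Dv_Par Dv_VApp)
            have "a \<le> b" using IH[of a A B G s' b] n CA \<open>R A B\<close> \<open>Dv B b\<close> by auto
            moreover have "r \<le> q" using IH[of r Rs Q' G Pr q] n CA \<open>R Rs Q'\<close> \<open>Dv Q' q\<close> tR dR by auto
            ultimately show ?thesis using n CA(4) \<open>m = _\<close> by simp
          next
            fix i x assume CA: "C = NApp (PV i) x" "c = 1"
            obtain Q' where "Q \<equiv>s Par (NApp (PV i) x) Q'" "R Rs Q'" using hb_vnapp[OF hb less.prems(1)] eqP CA by blast
            then have "Dv (Par (NApp (PV i) x) Q') m" using Dv_scong less.prems(4) by blast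
            then obtain q where "Dv Q' q" "m = 1 + q" by (auto simp: Dv_Par Dv_VNApp)
            have "r \<le> q" using IH[of r Rs Q' G Pr q] n CA \<open>R Rs Q'\<close> \<open>Dv Q' q\<close> tR dR by auto
            then show ?thesis using n CA \<open>m = _\<close> by simp
          qed
        qed
      qed
    qed
  qed
qed

theorem mainTheorem3:
  fixes P Q :: trm
  assumes "well_typed P" and "well_typed Q"
    and "SN P" and "SN Q"
    and "P \<equiv>s Q \<or> P \<sim>HOIO Q"
  shows "depth P = depth Q"
proof -
  obtain G s where tP: "typed G P s" using assms(1) unfolding well_typed_def by blast
  obtain G' s' where tQ: "typed G' Q s'" using assms(2) unfolding well_typed_def by blast
  obtain n where n: "dep P n" using dep_exists assms(3) tP by blast
  obtain m where m: "dep Q m" using dep_exists assms(4) tQ by blast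
  have "n = m" using assms(5)
  proof
    assume "P \<equiv>s Q"
    then have "Dv Q n" using Dv_scong Dv_dep[OF n] by blast
    then show "n = m" using Dv_fun Dv_dep[OF m] by blast
  next
    assume "P \<sim>HOIO Q"
    then obtain R where hb: "hoio_bisim R" "R P Q" unfolding hoio_sim_def by blast
    have "n \<le> m" using bisim_le[OF hb(1) hb(2) tP n Dv_dep[OF m]] .
    moreover have "m \<le> n" using bisim_le[OF hb(1) hb_sym[OF hb] tQ m Dv_dep[OF n]] .
    ultimately show "n = m" by simp
  qed
  then show ?thesis using depth_eq n m by simp
qed


end
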